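(* Let $\mathbf{D}^\pm_{EC}$ be EC fluctuations (satisfying (C1)–(C5)) that are smooth, and suppose the LGL differentiation matrix $\mathcal{D}$ is $p$th order accurate (for every sufficiently smooth scalar $g$, $\sum_m\mathcal{D}_{im}g(\xi_m)=g'(\xi_i)+\mathcal{O}(\Delta\xi^p)$). Then the nonconservative DGSEM in flux differencing form $$\omega_i\frac{\Delta x_k}{2}\dot{\mathbf{U}}^k_i+\omega_i\sum_{m=0}^N 2\mathcal{D}_{im}\mathbf{D}^-_{EC}(\mathbf{U}^k_i,\mathbf{U}^k_m)+\delta_{i0}\mathbf{D}^+_{EC}(\mathbf{U}^{k-1}_N,\mathbf{U}^k_0)+\delta_{iN}\mathbf{D}^-_{EC}(\mathbf{U}^k_N,\mathbf{U}^{k+1}_0)=0$$ (i) approximates the nonconservative product in the volume with order $p$, i.e. for smooth $\mathbf{u}(\xi)$, $\sum_m 2\mathcal{D}_{im}\mathbf{D}^-_{EC}(\mathbf{u}(\xi_i),\mathbf{u}(\xi_m))=\mathbf{A}(\mathbf{u}(\xi_i))\mathbf{u}'(\xi_i)+\mathcal{O}(\Delta\xi^p)$, and (ii) is entropy conservative: on each element (with time-differentiable solution), $\sum_{i}\omega_i\frac{\Delta x_k}{2}\frac{dS(\mathbf{U}^k_i)}{dt}=\mathcal{F}(\mathbf{U}^{k-1}_N,\mathbf{U}^k_0)-\mathcal{F}(\mathbf{U}^k_N,\mathbf{U}^{k+1}_0)$ with the consistent numerical entropy flux $\mathcal{F}(\mathbf{u}_L,\mathbf{u}_R)=q(\ma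thbf{u}_L)+\mathbf{w}(\mathbf{u}_L)^T\mathbf{D}^-_{EC}(\mathbf{u}_L,\mathbf{u}_R)$.
   Context: System: $\mathbf{u}_t+\mathbf{f}(\mathbf{u})_x+\mathbf{B}(\mathbf{u})\mathbf{u}_x=0$, $\mathbf{u}\in\mathcal{U}\subset\mathbb{R}^n$, generalized Jacobian $\mathbf{A}:=\mathbf{f}_{\mathbf{u}}+\mathbf{B}$. Entropy pair: a strictly convex $C^2$ function $S:\mathcal{U}\to\mathbb{R}$ and entropy flux $q$ with $q_{\mathbf{u}}=\mathbf{w}^T(\mathbf{f}_{\mathbf{u}}+\mathbf{B})$, where $\mathbf{w}(\mathbf{u}):=S_{\mathbf{u}}(\mathbf{u})$; write $\mathbf{w}_L=\mathbf{w}(\mathbf{u}_L)$, $q_L=q(\mathbf{u}_L)$, etc. A family of paths is a Lipschitz map $\Phi(s;\mathbf{u}_L,\mathbf{u}_R)\in\mathcal{U}$, $s\in[0,1]$, with $\Phi(0;\cdot)=\mathbf{u}_L$, $\Phi(1;\cdot)=\mathbf{u}_R$, $\Phi(s;\mathbf{u},\mathbf{u})=\mathbf{u}$. Fluctuations $\mathbf{D}^\pm:\mathcal{U}\times\mathcal{U}\to\mathbb{R}^n$ are EC if for all $\mathbf{u},\mathbf{u}_L,\mathbf{u}_R$: (C1) $\mathbf{D}^\pm(\mathbf{u},\mathbf{u})=0$; (C2) $\mathbf{D}^-(\mathbf{u}_L,\mathbf{u}_R)+\mathbf{D}^+(\mathbf{u}_L,\mathbf{u}_R)=\int_0^1\mathbf{A}(\Phi(s;\mathbf{u}_L,\mathbf{u}_R))\partial_s\Phi(s;\mathbf{u}_L,\mathbf{u}_R)\,ds$;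 (C3) $\mathbf{D}^-(\mathbf{u}_L,\mathbf{u}_R)+\mathbf{D}^+(\mathbf{u}_R,\mathbf{u}_L)=0$; (C4) $\mathbf{w}_L^T\mathbf{D}^-(\mathbf{u}_L,\mathbf{u}_R)+\mathbf{w}_R^T\mathbf{D}^+(\mathbf{u}_L,\mathbf{u}_R)=q_R-q_L$; (C5) $\frac{\partial\mathbf{D}^-(\mathbf{u}_L,\mathbf{u}_R)}{\partial\mathbf{u}_R}\big|_{\mathbf{u}_R=\mathbf{u}_L}=\frac12\mathbf{A}(\mathbf{u}_L)$. Discretization: elements $\Omega^k=[x_{k-1},x_k]$ of width $\Delta x_k$, affinely mapped to $[-1,1]$; nodal values $\mathbf{U}^k_i$ at LGL nodes $-1=\xi_0<\dots<\xi_N=1$ with LGL weights $\omega_i$; $\mathcal{D}_{ij}=l_j'(\xi_i)$ for the Lagrange basis $l_j$; these satisfy the summation-by-parts property $\mathcal{Q}+\mathcal{Q}^T=\mathcal{B}$ with $\mathcal{Q}_{ij}=\omega_i\mathcal{D}_{ij}$, $\mathcal{B}_{ij}=\delta_{iN}\delta_{jN}-\delta_{i0}\delta_{j0}$. *)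

theory Defs
  imports "HOL-Analysis.Analysis" "HOL-Computational_Algebra.Polynomial"
    "HOL-Library.Landau_Symbols"
begin

text \<open>Legendre polynomials via Bonnet's recursion
  (n+2) P_{n+2} = (2n+3) x P_{n+1} - (n+1) P_n.\<close>
fun legendre :: "nat \<Rightarrow> real poly" where
  "legendre 0 = 1"
| "legendre (Suc 0) = [:0, 1:]"
| "legendre (Suc (Suc n)) =
     smult (1 / (real n + 2))
       (smult (2 * real n + 3) ([:0, 1:] * legendre (Suc n)) - smult (real n + 1) (legendre n))"

text \<open>The LGL nodes of degree N are the roots of (1 - x^2) P_N'(x), listed increasingly:
  lgl_node N 0 = -1 < ... < lgl_node N N = 1 (for N >= 1).\<close>
definition lgl_node :: "nat \<Rightarrow> nat \<Rightarrow> real" where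
  "lgl_node N i =
     sorted_list_of_set {x. poly ([:1, 0, -1:] * pderiv (legendre N)) x = 0} ! i"

definition lgl_weight :: "nat \<Rightarrow> nat \<Rightarrow> real" where
  "lgl_weight N i = 2 / (real N * (real N + 1) * (poly (legendre N) (lgl_node N i))\<^sup>2)"

definition lagrange_basis :: "nat \<Rightarrow> nat \<Rightarrow> real poly" where
  "lagrange_basis N j =
     (\<Prod>k\<in>{0..N} - {j}. smult (1 / (lgl_node N j - lgl_node N k)) [:- lgl_node N k, 1:])"

definition lgl_D :: "nat \<Rightarrow> nat \<Rightarrow> nat \<Rightarrow> real" where
  "lgl_D N i j = poly (pderiv (lagrange_basis N j)) (lgl_node N i)"

definition strict_convex_on :: "'a::real_vector set \<Rightarrow> ('a \<Rightarrow> real) \<Rightarrow> bool" where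
  "strict_convex_on A f \<longleftrightarrow> convex A \<and>
     (\<forall>x\<in>A. \<forall>y\<in>A. x \<noteq> y \<longrightarrow> (\<forall>t. 0 < t \<and> t < 1 \<longrightarrow>
        f ((1 - t) *\<^sub>R x + t *\<^sub>R y) < (1 - t) * f x + t * f y))"

text \<open>C^infinity on an open set: there is a family F of iterated Frechet derivatives,
  F vs x = d^k f(x)[v_1,...,v_k] for vs = [v_k,...,v_1], with F [] = f, each F vs having
  Frechet derivative v \<mapsto> F (v # vs) x at every point of A, and each F vs continuous on A.\<close>
definition smooth_on :: "'a::real_normed_vector set \<Rightarrow> ('a \<Rightarrow> 'b::real_normed_vector) \<Rightarrow> bool" where
  "smooth_on A f \<longleftrightarrow> (\<exists>F :: 'a list \<Rightarrow> 'a \<Rightarrow> 'b.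
     (\<forall>x\<in>A. F [] x = f x) \<and>
     (\<forall>vs. \<forall>x\<in>A. (F vs has_derivative (\<lambda>v. F (v # vs) x)) (at x)) \<and>
     (\<forall>vs. continuous_on A (F vs)))"

definition C2_with_gradient :: "('a::euclidean_space) set \<Rightarrow> ('a \<Rightarrow> real) \<Rightarrow> ('a \<Rightarrow> 'a) \<Rightarrow> bool" where
  "C2_with_gradient A S w \<longleftrightarrow>
     (\<forall>u\<in>A. (S has_derivative (\<lambda>v. w u \<bullet> v)) (at u)) \<and>
     (\<exists>H :: 'a \<Rightarrow> 'a \<Rightarrow>\<^sub>L 'a. (\<forall>u\<in>A. (w has_derivative blinfun_apply (H u)) (at u))
        \<and> continuous_on A H)"

text \<open>Generalized Jacobian A(u) = f_u(u) + B(u), where fder u is the Frechet derivative of f.\<close>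
definition gen_jacobian ::
  "(real^'a::finite \<Rightarrow> ((real^'a) \<Rightarrow>\<^sub>L (real^'a))) \<Rightarrow> (real^'a \<Rightarrow> real^'a^'a) \<Rightarrow> real^'a \<Rightarrow> real^'a^'a" where
  "gen_jacobian fder B u = matrix (blinfun_apply (fder u)) + B u"

definition path_family :: "(real^'n::finite) set \<Rightarrow> (real \<Rightarrow> real^'n \<Rightarrow> real^'n \<Rightarrow> real^'n) \<Rightarrow> bool" where
  "path_family U \<Phi> \<longleftrightarrow>
     (\<exists>L. L-lipschitz_on ({0..1} \<times> U \<times> U) (\<lambda>(s, a, b). \<Phi> s a b)) \<and>
     (\<forall>s\<in>{0..1}. \<forall>a\<in>U. \<forall>b\<in>U. \<Phi> s a b \<in> U) \<and>
     (\<forall>a\<in>U. \<forall>b\<in>U. \<Phi> 0 a b = a \<and> \<Phi> 1 a b = b) \<and>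
     (\<forall>s\<in>{0..1}. \<forall>u\<in>U. \<Phi> s u u = u)"

definition EC_fluctuations ::
  "(real^'n::finite) set \<Rightarrow> (real^'n \<Rightarrow> real^'n^'n) \<Rightarrow> (real \<Rightarrow> real^'n \<Rightarrow> real^'n \<Rightarrow> real^'n)
   \<Rightarrow> (real^'n \<Rightarrow> real^'n) \<Rightarrow> (real^'n \<Rightarrow> real)
   \<Rightarrow> (real^'n \<Rightarrow> real^'n \<Rightarrow> real^'n) \<Rightarrow> (real^'n \<Rightarrow> real^'n \<Rightarrow> real^'n) \<Rightarrow> bool" where
  "EC_fluctuations U A \<Phi> w q Dm Dp \<longleftrightarrow>
     (\<forall>u\<in>U. Dm u u = 0 \<and> Dp u u = 0) \<and>
     (\<forall>a\<in>U. \<forall>b\<in>U.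
        ((\<lambda>s. A (\<Phi> s a b) *v vector_derivative (\<lambda>s. \<Phi> s a b) (at s)) has_integral (Dm a b + Dp a b)) {0..1}) \<and>
     (\<forall>a\<in>U. \<forall>b\<in>U. Dm a b + Dp b a = 0) \<and>
     (\<forall>a\<in>U. \<forall>b\<in>U. w a \<bullet> Dm a b + w b \<bullet> Dp a b = q b - q a) \<and>
     (\<forall>a\<in>U. ((\<lambda>v. Dm a v) has_derivative (\<lambda>v. (1/2) *\<^sub>R (A a *v v))) (at a))"

end

theory Submission
  imports Defs
begin

lemma leg_p_rec: "poly (legendre (Suc (Suc n))) x =
  ((2*real n+3) * x * poly (legendre (Suc n)) x - (real n+1) * poly (legendre n) x) / (real n + 2)"
  by (simp add: field_simps)

lemma leg_d_rec: "poly (pderiv (legendre (Suc (Suc n)))) x =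
  ((2*real n+3) * (poly (legendre (Suc n)) x + x * poly (pderiv (legendre (Suc n))) x)
    - (real n+1) * poly (pderiv (legendre n)) x) / (real n + 2)"
  by (simp add: pderiv_smult pderiv_diff pderiv_mult pderiv_pCons field_simps)

lemma leg_0 [simp]: "poly (legendre 0) x = 1" "poly (pderiv (legendre 0)) x = 0"
  by simp_all
lemma leg_1 [simp]: "poly (legendre (Suc 0)) x = x" "poly (pderiv (legendre (Suc 0))) x = 1"
  by (simp_all add: pderiv_pCons)

lemma leg_I23: "x * poly (pderiv (legendre (Suc n))) x - poly (pderiv (legendre n)) x
      = (real n + 1) * poly (legendre (Suc n)) x
   \<and> (1 - x^2) * poly (pderiv (legendre (Suc n))) x
      = (real n + 1) * (poly (legendre n) x - x * poly (legendre (Suc n)) x)"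
proof (induction n)
  case 0
  then show ?case by (simp add: power2_eq_square pderiv_pCons)
next
  case (Suc m)
  define p0 where "p0 = poly (legendre m) x"
  define p1 where "p1 = poly (legendre (Suc m)) x"
  define p2 where "p2 = poly (legendre (Suc (Suc m))) x"
  define d0 where "d0 = poly (pderiv (legendre m)) x"
  define d1 where "d1 = poly (pderiv (legendre (Suc m))) x"
  define d2 where "d2 = poly (pderiv (legendre (Suc (Suc m)))) x"
  have R1: "(real m + 2) * p2 = (2*real m+3) * x * p1 - (real m+1) * p0"
    unfolding p2_def p1_def p0_def leg_p_rec by (simp add: field_simps)
  have R2: "(real m + 2) * d2 = (2*real m+3) * (p1 + x * d1) - (real m+1) * d0"
    unfolding d2_def d1_def d0_def p1_def leg_d_rec by (simp add: field_simps)
  have I2: "x * d1 - d0 = (real m + 1) * p1" using Suc.IH unfolding d1_def d0_def p1_def by simp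
  have I3: "(1 - x^2) * d1 = (real m + 1) * (p0 - x * p1)" using Suc.IH unfolding d1_def p0_def p1_def by simp
  have I1: "(real m + 2) * d2 = (real m + 2) * (x * d1 + (real m + 2) * p1)"
    using R2 I2 by algebra
  hence I1': "d2 = x * d1 + (real m + 2) * p1" by simp
  have G2: "(real m + 2) * (x * d2 - d1) = (real m + 2) * ((real (Suc m) + 1) * p2)"
    using I1' I3 R1 by (simp add: power2_eq_square) algebra
  have G3: "(real m + 2) * ((1 - x^2) * d2) = (real m + 2) * ((real (Suc m) + 1) * (p1 - x * p2))"
    using I1' I3 R1 by (simp add: power2_eq_square) algebra
  have "m + 2 > (0::real)" by simp
  hence G2': "x * d2 - d1 = (real (Suc m) + 1) * p2" and G3': "(1 - x^2) * d2 = (real (Suc m) + 1) * (p1 - x * p2)"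
    using G2 G3 by simp_all
  show ?case using G2' G3' unfolding p2_def d2_def d1_def p1_def by blast
qed


lemma leg_I3_poly: "[:1,0,-1:] * pderiv (legendre (Suc m)) = smult (real m + 1) (legendre m - pCons 0 (legendre (Suc m)))"
proof -
  have "poly ([:1,0,-1:] * pderiv (legendre (Suc m))) x = poly (smult (real m + 1) (legendre m - pCons 0 (legendre (Suc m)))) x" for x
    using conjunct2[OF leg_I23[of x m]] by (simp add: power2_eq_square algebra_simps)
  thus ?thesis using poly_eq_poly_eq_iff by blast
qed

lemma leg_ode: "poly (pderiv ([:1,0,-1:] * pderiv (legendre n))) x = -(real n*(real n+1)) * poly (legendre n) x"
proof (cases n)
  case 0 then show ?thesis by simp
next
  case (Suc m)
  have "poly (pderiv ([:1,0,-1:] * pderiv (legendre n))) x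
     = (real m + 1) * (poly (pderiv (legendre m)) x - poly (legendre (Suc m)) x - x * poly (pderiv (legendre (Suc m))) x)"
    unfolding Suc leg_I3_poly by (simp add: pderiv_smult pderiv_diff pderiv_pCons algebra_simps)
  also have "\<dots> = -(real n*(real n+1)) * poly (legendre n) x"
    using conjunct1[OF leg_I23[of x m]] unfolding Suc by (simp add: algebra_simps)
  finally show ?thesis .
qed

lemma leg_ode_expand: "poly (pderiv ([:1,0,-1:] * pderiv (legendre n))) x =
   -2*x* poly (pderiv (legendre n)) x + (1 - x^2) * poly (pderiv (pderiv (legendre n))) x"
proof -
  have "pderiv [:1,0,-1::real:] = [:0,-2:]" by (simp add: pderiv_pCons)
  hence "pderiv ([:1,0,-1:] * pderiv (legendre n)) = [:0,-2:] * pderiv (legendre n) + [:1,0,-1:] * pderiv (pderiv (legendre n))"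
    using pderiv_mult[of "[:1,0,-1::real:]" "pderiv (legendre n)"] by simp
  thus ?thesis by (simp add: power2_eq_square algebra_simps)
qed

lemma leg_pm1: "poly (legendre n) 1 = 1 \<and> poly (legendre n) (-1) = (-1)^n"
proof (induction n rule: legendre.induct)
  case (3 n)
  then show ?case unfolding leg_p_rec by (simp add: field_simps)
qed simp_all

lemma leg_deg: "degree (legendre n) = n \<and> coeff (legendre n) n > 0"
proof (induction n rule: legendre.induct)
  case 1 then show ?case by simp
next
  case 2 then show ?case by simp
next
  case (3 n)
  let ?P = "legendre (Suc (Suc n))"
  have c: "coeff ?P (Suc (Suc n)) = (2*real n+3) * coeff (legendre (Suc n)) (Suc n) / (real n+2)"
    using 3 by (simp add: coeff_eq_0 field_simps)
  have cp: "coeff ?P (Suc (Suc n)) > 0" unfolding c using 3 by simp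
  have "degree ?P \<le> Suc (Suc n)"
    using 3 by (simp add: degree_diff_le degree_pCons_le)
  moreover have "coeff ?P (Suc (Suc n)) \<noteq> 0" using cp by linarith
  hence "Suc (Suc n) \<le> degree ?P" by (rule le_degree)
  ultimately have "degree ?P = Suc (Suc n)" by linarith
  thus ?case using cp by blast
qed

lemma leg_W_pos: "poly (pderiv (legendre (Suc m))) x * poly (legendre m) x
     - poly (legendre (Suc m)) x * poly (pderiv (legendre m)) x > 0"
proof (induction m)
  case 0 then show ?case by (simp add: pderiv_pCons)
next
  case (Suc m)
  define p0 where "p0 = poly (legendre m) x"
  define p1 where "p1 = poly (legendre (Suc m)) x"
  define p2 where "p2 = poly (legendre (Suc (Suc m))) x"
  define d0 where "d0 = poly (pderiv (legendre m)) x"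
  define d1 where "d1 = poly (pderiv (legendre (Suc m))) x"
  define d2 where "d2 = poly (pderiv (legendre (Suc (Suc m)))) x"
  have R1: "(real m + 2) * p2 = (2*real m+3) * x * p1 - (real m+1) * p0"
    unfolding p2_def p1_def p0_def leg_p_rec by (simp add: field_simps)
  have R2: "(real m + 2) * d2 = (2*real m+3) * (p1 + x * d1) - (real m+1) * d0"
    unfolding d2_def d1_def d0_def p1_def leg_d_rec by (simp add: field_simps)
  have IH: "d1 * p0 - p1 * d0 > 0" using Suc.IH unfolding d1_def p0_def p1_def d0_def .
  have E: "(real m + 2) * (d2 * p1 - p2 * d1) = (2*real m+3) * p1^2 + (real m + 1) * (d1 * p0 - p1 * d0)"
    using R1 R2 by (simp add: power2_eq_square) algebra
  have "(2*real m+3) * p1^2 + (real m + 1) * (d1 * p0 - p1 * d0) > 0"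
    using IH by (intro add_nonneg_pos) simp_all
  hence "(real m + 2) * (d2 * p1 - p2 * d1) > 0" using E by simp
  hence "d2 * p1 - p2 * d1 > 0" by (simp add: zero_less_mult_iff)
  thus ?case unfolding d2_def p1_def p2_def d1_def .
qed


lemma poly_sign_right:
  fixes p :: "real poly"
  assumes "poly p a = 0" "a < b" "\<forall>x. a < x \<and> x \<le> b \<longrightarrow> poly p x \<noteq> 0"
  shows "poly (pderiv p) a > 0 \<Longrightarrow> poly p b > 0"
    and "poly (pderiv p) a < 0 \<Longrightarrow> poly p b < 0"
proof -
  assume d: "poly (pderiv p) a > 0"
  obtain e where e: "e > 0" "\<forall>h>0. h < e \<longrightarrow> poly p a < poly p (a + h)"
    using DERIV_pos_inc_right[OF poly_DERIV d] by blast
  define h where "h = min (e/2) (b - a)"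
  have h: "h > 0" "h < e" "a + h \<le> b" using e assms(2) by (auto simp: h_def)
  have c: "poly p (a + h) > 0" using e(2) h assms(1) by auto
  show "poly p b > 0"
  proof (rule ccontr)
    assume "\<not> poly p b > 0"
    hence "poly p b < 0" using assms(3) assms(2) by force
    then show False
    proof (cases "a + h = b")
      case True then show ?thesis using c \<open>poly p b < 0\<close> by simp
    next
      case False
      then have "a + h < b" using h by simp
      from poly_IVT_neg[OF this c \<open>poly p b < 0\<close>] obtain x where "x > a + h" "x < b" "poly p x = 0" by blast
      then show False using assms(3) h by force
    qed
  qed
next
  assume d: "poly (pderiv p) a < 0"
  obtain e where e: "e > 0" "\<forall>h>0. h < e \<longrightarrow> poly p (a + h) < poly p a"
    using DERIV_neg_dec_right[OF poly_DERIV d] by blast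
  define h where "h = min (e/2) (b - a)"
  have h: "h > 0" "h < e" "a + h \<le> b" using e assms(2) by (auto simp: h_def)
  have c: "poly p (a + h) < 0" using e(2) h assms(1) by auto
  show "poly p b < 0"
  proof (rule ccontr)
    assume "\<not> poly p b < 0"
    hence "poly p b > 0" using assms(3) assms(2) by force
    then show False
    proof (cases "a + h = b")
      case True then show ?thesis using c \<open>poly p b > 0\<close> by simp
    next
      case False
      then have "a + h < b" using h by simp
      from poly_IVT_pos[OF this c \<open>poly p b > 0\<close>] obtain x where "x > a + h" "x < b" "poly p x = 0" by blast
      then show False using assms(3) h by force
    qed
  qed
qed

lemma poly_sign_left:
  fixes p :: "real poly"
  assumes "poly p b = 0" "a < b" "\<forall>x. a \<le> x \<and> x < b \<longrightarrow> poly p x \<noteq> 0"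
  shows "poly (pderiv p) b > 0 \<Longrightarrow> poly p a < 0"
    and "poly (pderiv p) b < 0 \<Longrightarrow> poly p a > 0"
proof -
  assume d: "poly (pderiv p) b > 0"
  obtain e where e: "e > 0" "\<forall>h>0. h < e \<longrightarrow> poly p (b - h) < poly p b"
    using DERIV_pos_inc_left[OF poly_DERIV d] by blast
  define h where "h = min (e/2) (b - a)"
  have h: "h > 0" "h < e" "a \<le> b - h" using e assms(2) by (auto simp: h_def)
  have c: "poly p (b - h) < 0" using e(2) h assms(1) by auto
  show "poly p a < 0"
  proof (rule ccontr)
    assume "\<not> poly p a < 0"
    hence "poly p a > 0" using assms(3) assms(2) by force
    then show False
    proof (cases "a = b - h")
      case True then show ?thesis using c \<open>poly p a > 0\<close> by simp
    next
      case False
      then have "a < b - h" using h by simp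
      from poly_IVT_neg[OF this \<open>poly p a > 0\<close> c] obtain x where "x > a" "x < b - h" "poly p x = 0" by blast
      then show False using assms(3) h by force
    qed
  qed
next
  assume d: "poly (pderiv p) b < 0"
  obtain e where e: "e > 0" "\<forall>h>0. h < e \<longrightarrow> poly p b < poly p (b - h)"
    using DERIV_neg_dec_left[OF poly_DERIV d] by blast
  define h where "h = min (e/2) (b - a)"
  have h: "h > 0" "h < e" "a \<le> b - h" using e assms(2) by (auto simp: h_def)
  have c: "poly p (b - h) > 0" using e(2) h assms(1) by auto
  show "poly p a > 0"
  proof (rule ccontr)
    assume "\<not> poly p a > 0"
    hence "poly p a < 0" using assms(3) assms(2) by force
    then show False
    proof (cases "a = b - h")
      case True then show ?thesis using c \<open>poly p a < 0\<close> by simp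
    next
      case False
      then have "a < b - h" using h by simp
      from poly_IVT_pos[OF this \<open>poly p a < 0\<close> c] obtain x where "x > a" "x < b - h" "poly p x = 0" by blast
      then show False using assms(3) h by force
    qed
  qed
qed

lemma count_roots_alternating:
  fixes p :: "real poly" and y :: "nat \<Rightarrow> real"
  assumes "p \<noteq> 0" "\<And>j. j < m \<Longrightarrow> y j < y (Suc j)"
    "\<And>j. j < m \<Longrightarrow> poly p (y j) * poly p (y (Suc j)) < 0"
  shows "m \<le> card {x. poly p x = 0 \<and> y 0 < x \<and> x < y m}"
proof -
  have mono: "y j < y k" if "j < k" "k \<le> m" for j k
    using that
  proof (induction k)
    case 0 then show ?case by simp
  next
    case (Suc k)
    then show ?case using assms(2) by (cases "j = k") (auto intro: less_trans)
  qed
  have monole: "y j \<le> y k" if "j \<le> k" "k \<le> m" for j k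
    using mono[of j k] that by (cases "j = k") auto
  have "\<forall>j. \<exists>z. j < m \<longrightarrow> (y j < z \<and> z < y (Suc j) \<and> poly p z = 0)"
    using poly_IVT assms(2,3) by blast
  then obtain z where z: "\<And>j. j < m \<Longrightarrow> y j < z j \<and> z j < y (Suc j) \<and> poly p (z j) = 0"
    by metis
  have inj: "inj_on z {..<m}"
  proof (rule inj_onI)
    fix j k assume jk: "j \<in> {..<m}" "k \<in> {..<m}" "z j = z k"
    show "j = k"
    proof (rule ccontr)
      assume "j \<noteq> k"
      then consider "j < k" | "k < j" by linarith
      then show False
      proof cases
        case 1
        have "z j < y (Suc j)" using z[of j] jk(1) by blast
        also have "y (Suc j) \<le> y k" using 1 jk by (intro monole) auto
        also have "y k < z k" using z[of k] jk(2) by blast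
        finally show False using jk by simp
      next
        case 2
        have "z k < y (Suc k)" using z[of k] jk(2) by blast
        also have "y (Suc k) \<le> y j" using 2 jk by (intro monole) auto
        also have "y j < z j" using z[of j] jk(1) by blast
        finally show False using jk by simp
      qed
    qed
  qed
  have sub: "z ` {..<m} \<subseteq> {x. poly p x = 0 \<and> y 0 < x \<and> x < y m}"
  proof
    fix x assume "x \<in> z ` {..<m}"
    then obtain j where j: "j < m" "x = z j" by auto
    have "y 0 \<le> y j" using j by (intro monole) auto
    moreover have "y (Suc j) \<le> y m" using j by (intro monole) auto
    ultimately show "x \<in> {x. poly p x = 0 \<and> y 0 < x \<and> x < y m}" using z[OF j(1)] j by auto
  qed
  have fin: "finite {x. poly p x = 0 \<and> y 0 < x \<and> x < y m}"
    using poly_roots_finite[OF assms(1)] by (rule rev_finite_subset) auto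
  have "card {..<m} \<le> card {x. poly p x = 0 \<and> y 0 < x \<and> x < y m}"
    by (rule card_inj_on_le[OF inj sub fin])
  thus ?thesis by simp
qed


lemma opp_deriv_consec:
  fixes p :: "real poly"
  assumes "poly p a = 0" "poly p b = 0" "a < b" "\<forall>x. a < x \<and> x < b \<longrightarrow> poly p x \<noteq> 0"
    "poly (pderiv p) a \<noteq> 0" "poly (pderiv p) b \<noteq> 0"
  shows "poly (pderiv p) a * poly (pderiv p) b < 0"
proof -
  define c where "c = (a + b) / 2"
  have c: "a < c" "c < b" using assms(3) by (auto simp: c_def)
  have r: "\<forall>x. a < x \<and> x \<le> c \<longrightarrow> poly p x \<noteq> 0" using assms(4) c by auto
  have l: "\<forall>x. c \<le> x \<and> x < b \<longrightarrow> poly p x \<noteq> 0" using assms(4) c by auto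
  note R = poly_sign_right[OF assms(1) c(1) r] and L = poly_sign_left[OF assms(2) c(2) l]
  consider "poly (pderiv p) a > 0" | "poly (pderiv p) a < 0" using assms(5) by linarith
  then show ?thesis
  proof cases
    case 1
    then have "poly p c > 0" using R by blast
    then have "poly (pderiv p) b < 0" using L assms(6) by force
    then show ?thesis using 1 by (simp add: mult_pos_neg)
  next
    case 2
    then have "poly p c < 0" using R by blast
    then have "poly (pderiv p) b > 0" using L assms(6) by force
    then show ?thesis using 2 by (simp add: mult_neg_pos)
  qed
qed

lemma sorted_nth_between:
  fixes xs :: "real list"
  assumes "sorted_wrt (<) xs" "x \<in> set xs" "Suc i < length xs"
  shows "\<not> (xs ! i < x \<and> x < xs ! Suc i)"
proof
  assume a: "xs ! i < x \<and> x < xs ! Suc i"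
  obtain k where k: "k < length xs" "x = xs ! k" using assms(2) by (auto simp: in_set_conv_nth)
  show False
  proof (cases "k \<le> i")
    case True
    have "xs ! k \<le> xs ! i"
    proof (cases "k = i")
      case False
      then have "k < i" using True by simp
      then show ?thesis using sorted_wrt_nth_less[OF assms(1) \<open>k < i\<close>] assms(3) by simp
    qed simp
    then show False using a k by simp
  next
    case False
    have "xs ! Suc i \<le> xs ! k"
    proof (cases "k = Suc i")
      case False
      then have "Suc i < k" using \<open>\<not> k \<le> i\<close> by simp
      then show ?thesis using sorted_wrt_nth_less[OF assms(1) \<open>Suc i < k\<close>] k by simp
    qed simp
    then show False using a k by simp
  qed
qed

lemma sorted_nth_first:
  fixes xs :: "real list"
  assumes "sorted_wrt (<) xs" "x \<in> set xs"
  shows "xs ! 0 \<le> x"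
proof -
  obtain k where k: "k < length xs" "x = xs ! k" using assms(2) by (auto simp: in_set_conv_nth)
  show ?thesis using assms(1) k by (cases k) (auto dest: sorted_wrt_nth_less)
qed

lemma sorted_nth_last:
  fixes xs :: "real list"
  assumes "sorted_wrt (<) xs" "x \<in> set xs"
  shows "x \<le> xs ! (length xs - 1)"
proof -
  obtain k where k: "k < length xs" "x = xs ! k" using assms(2) by (auto simp: in_set_conv_nth)
  show ?thesis
  proof (cases "k = length xs - 1")
    case False
    then have "k < length xs - 1" using k by simp
    then show ?thesis using sorted_wrt_nth_less[OF assms(1) \<open>k < length xs - 1\<close>] k by fastforce
  qed (use k in simp)
qed

lemma sign3: "(u::real) * v < 0 \<Longrightarrow> v * w < 0 \<Longrightarrow> w * z < 0 \<Longrightarrow> u * z < 0"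
  by (smt (verit, best) mult_less_0_iff)

lemma leg_nonzero: "legendre n \<noteq> 0"
  using leg_deg[of n] by auto

lemma leg_roots: "card {x. poly (legendre (Suc m)) x = 0} = Suc m \<and>
   (\<forall>x. poly (legendre (Suc m)) x = 0 \<longrightarrow> -1 < x \<and> x < 1)"
proof (induction m)
  case 0
  have "{x::real. x = 0} = {0}" by auto
  then show ?case by simp
next
  case (Suc m)
  define n where "n = Suc m"
  define P where "P = legendre n"
  define Q where "Q = legendre (Suc n)"
  define R where "R = {x. poly P x = 0}"
  define xs where "xs = sorted_list_of_set R"
  have finR: "finite R" unfolding R_def P_def by (rule poly_roots_finite[OF leg_nonzero])
  have cardR: "card R = n" using Suc.IH unfolding R_def P_def n_def by simp
  have inR: "x \<in> R \<Longrightarrow> -1 < x \<and> x < 1" for x using Suc.IH unfolding R_def P_def n_def by simp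
  have setxs: "set xs = R" unfolding xs_def using finR by simp
  have lenxs: "length xs = n" unfolding xs_def using cardR by simp
  have sxs: "sorted_wrt (<) xs" unfolding xs_def by simp
  have npos: "n > 0" unfolding n_def by simp
  have xsR: "i < n \<Longrightarrow> xs ! i \<in> R" for i using setxs lenxs by auto
  have dnz: "poly (pderiv P) x \<noteq> 0" if "x \<in> R" for x
    using leg_W_pos[of m x] that unfolding R_def P_def n_def by auto
  have QP: "poly Q x * poly (pderiv P) x < 0" if "x \<in> R" for x
    using leg_W_pos[of n x] that unfolding R_def P_def Q_def by (simp add: algebra_simps)
  define y where "y j = (if j = 0 then -1 else if j \<le> n then xs ! (j - 1) else 1)" for j
  have ymono: "y j < y (Suc j)" if jn: "j < Suc n" for j
  proof -
    consider "j = 0" | "0 < j" "j < n" | "j = n" using jn by (cases "j = 0"; cases "j < n") auto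
    then show ?thesis
    proof cases
      case 1 then show ?thesis using inR[OF xsR[of 0]] npos by (simp add: y_def)
    next
      case 2 then show ?thesis using sxs lenxs
        by (simp add: y_def sorted_wrt_nth_less)
    next
      case 3 then show ?thesis using inR[OF xsR[of "n - 1"]] npos by (simp add: y_def)
    qed
  qed
  have alt: "poly Q (y j) * poly Q (y (Suc j)) < 0" if jn: "j < Suc n" for j
  proof -
    consider "j = 0" | "0 < j" "j < n" | "j = n" using jn by (cases "j = 0"; cases "j < n") auto
    then show ?thesis
    proof cases
      case 1
      define b where "b = xs ! 0"
      have bR: "b \<in> R" using xsR npos b_def by simp
      have nor: "\<forall>x. -1 \<le> x \<and> x < b \<longrightarrow> poly P x \<noteq> 0"
        using sorted_nth_first[OF sxs] setxs b_def unfolding R_def by force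
      have Pb: "poly P b = 0" using bR R_def by simp
      have "-1 < b" using inR bR by simp
      note L = poly_sign_left[OF Pb this nor]
      have s1: "poly (pderiv P) b * poly P (-1) < 0"
        using L dnz[OF bR] by (cases "poly (pderiv P) b > 0") (auto simp: mult_less_0_iff)
      have Qm: "poly Q (-1) = - poly P (-1)" using leg_pm1[of n] leg_pm1[of "Suc n"] unfolding P_def Q_def by simp
      have "poly Q (-1) * poly Q b < 0"
      proof -
        have "poly Q b * poly (pderiv P) b < 0" using QP[OF bR] .
        then have "poly Q b * poly P (-1) > 0"
          using s1 by (smt (verit, best) mult_less_0_iff zero_less_mult_iff)
        then show ?thesis using Qm by (simp add: algebra_simps)
      qed
      then show ?thesis using 1 npos by (simp add: y_def b_def)
    next
      case 2
      define a where "a = xs ! (j - 1)"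
      define b where "b = xs ! j"
      have aR: "a \<in> R" using xsR 2 a_def by simp
      have bR: "b \<in> R" using xsR 2 b_def by simp
      have ab: "a < b" using sxs 2 lenxs unfolding a_def b_def by (simp add: sorted_wrt_nth_less)
      have nor: "\<forall>x. a < x \<and> x < b \<longrightarrow> poly P x \<noteq> 0"
        using sorted_nth_between[OF sxs, of _ "j - 1"] 2 lenxs setxs unfolding a_def b_def R_def by force
      have "poly (pderiv P) a * poly (pderiv P) b < 0"
        using opp_deriv_consec[OF _ _ ab nor dnz[OF aR] dnz[OF bR]] aR bR R_def by simp
      then have "poly Q a * poly Q b < 0"
        using QP[OF aR] QP[OF bR] by (smt (verit, best) mult_less_0_iff zero_less_mult_iff)
      then show ?thesis using 2 by (simp add: y_def a_def b_def)
    next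
      case 3
      define a where "a = xs ! (n - 1)"
      have aR: "a \<in> R" using xsR npos a_def by simp
      have nor: "\<forall>x. a < x \<and> x \<le> 1 \<longrightarrow> poly P x \<noteq> 0"
        using sorted_nth_last[OF sxs] setxs lenxs inR a_def unfolding R_def by force
      have Pa: "poly P a = 0" using aR R_def by simp
      have "a < 1" using inR aR by simp
      note Rr = poly_sign_right[OF Pa this nor]
      have P1: "poly P 1 = 1" using leg_pm1 P_def by simp
      have "poly (pderiv P) a > 0" using Rr dnz[OF aR] P1 by (cases "poly (pderiv P) a > 0") auto
      then have "poly Q a < 0" using QP[OF aR] by (simp add: mult_less_0_iff)
      moreover have "poly Q 1 = 1" using leg_pm1 Q_def by simp
      ultimately show ?thesis using 3 npos by (simp add: y_def a_def)
    qed
  qed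
  have Qnz: "Q \<noteq> 0" unfolding Q_def by (rule leg_nonzero)
  have y0: "y 0 = -1" and yn: "y (Suc n) = 1" by (simp_all add: y_def)
  have c1: "Suc n \<le> card {x. poly Q x = 0 \<and> -1 < x \<and> x < 1}"
    using count_roots_alternating[of Q "Suc n" y, OF Qnz ymono alt] y0 yn by simp
  have c2: "card {x. poly Q x = 0} \<le> Suc n"
    using card_poly_roots_bound[OF Qnz] leg_deg[of "Suc n"] Q_def by simp
  have sub: "{x. poly Q x = 0 \<and> -1 < x \<and> x < 1} \<subseteq> {x. poly Q x = 0}" by auto
  have fin: "finite {x. poly Q x = 0}" by (rule poly_roots_finite[OF Qnz])
  have c3: "card {x. poly Q x = 0 \<and> -1 < x \<and> x < 1} \<le> card {x. poly Q x = 0}"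
    by (rule card_mono[OF fin sub])
  have eq: "{x. poly Q x = 0 \<and> -1 < x \<and> x < 1} = {x. poly Q x = 0}"
    by (rule card_subset_eq[OF fin sub]) (use c1 c2 c3 in linarith)
  have "card {x. poly Q x = 0} = Suc n" using c1 c2 c3 by linarith
  moreover have "\<forall>x. poly Q x = 0 \<longrightarrow> -1 < x \<and> x < 1" using eq by blast
  ultimately show ?case unfolding Q_def n_def by simp
qed


lemma count_roots_gen:
  fixes p :: "real poly" and y :: "nat \<Rightarrow> real"
  assumes "p \<noteq> 0" "\<And>j. j < m \<Longrightarrow> y j < y (Suc j)"
    "\<And>j. j < m \<Longrightarrow> \<exists>z. y j < z \<and> z < y (Suc j) \<and> poly p z = 0"
  shows "m \<le> card {x. poly p x = 0 \<and> y 0 < x \<and> x < y m}"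
proof -
  have mono: "y j < y k" if "j < k" "k \<le> m" for j k
    using that
  proof (induction k)
    case 0 then show ?case by simp
  next
    case (Suc k)
    then show ?case using assms(2) by (cases "j = k") (auto intro: less_trans)
  qed
  have monole: "y j \<le> y k" if "j \<le> k" "k \<le> m" for j k
    using mono[of j k] that by (cases "j = k") auto
  have "\<forall>j. \<exists>z. j < m \<longrightarrow> (y j < z \<and> z < y (Suc j) \<and> poly p z = 0)"
    using assms(3) by blast
  then obtain z where z: "\<And>j. j < m \<Longrightarrow> y j < z j \<and> z j < y (Suc j) \<and> poly p (z j) = 0"
    by metis
  have inj: "inj_on z {..<m}"
  proof (rule inj_onI)
    fix j k assume jk: "j \<in> {..<m}" "k \<in> {..<m}" "z j = z k"
    show "j = k"
    proof (rule ccontr)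
      assume "j \<noteq> k"
      then consider "j < k" | "k < j" by linarith
      then show False
      proof cases
        case 1
        have "z j < y (Suc j)" using z[of j] jk(1) by blast
        also have "y (Suc j) \<le> y k" using 1 jk by (intro monole) auto
        also have "y k < z k" using z[of k] jk(2) by blast
        finally show False using jk by simp
      next
        case 2
        have "z k < y (Suc k)" using z[of k] jk(2) by blast
        also have "y (Suc k) \<le> y j" using 2 jk by (intro monole) auto
        also have "y j < z j" using z[of j] jk(1) by blast
        finally show False using jk by simp
      qed
    qed
  qed
  have sub: "z ` {..<m} \<subseteq> {x. poly p x = 0 \<and> y 0 < x \<and> x < y m}"
  proof
    fix x assume "x \<in> z ` {..<m}"
    then obtain j where j: "j < m" "x = z j" by auto
    have "y 0 \<le> y j" using j by (intro monole) auto
    moreover have "y (Suc j) \<le> y m" using j by (intro monole) auto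
    ultimately show "x \<in> {x. poly p x = 0 \<and> y 0 < x \<and> x < y m}" using z[OF j(1)] j by auto
  qed
  have fin: "finite {x. poly p x = 0 \<and> y 0 < x \<and> x < y m}"
    using poly_roots_finite[OF assms(1)] by (rule rev_finite_subset) auto
  have "card {..<m} \<le> card {x. poly p x = 0 \<and> y 0 < x \<and> x < y m}"
    by (rule card_inj_on_le[OF inj sub fin])
  thus ?thesis by simp
qed

lemma poly_rolle:
  fixes p :: "real poly"
  assumes "a < b" "poly p a = poly p b"
  shows "\<exists>z. a < z \<and> z < b \<and> poly (pderiv p) z = 0"
proof -
  have "\<exists>z>a. z < b \<and> (poly p has_real_derivative 0) (at z)"
    by (rule Rolle[OF assms]) (auto intro: continuous_intros poly_DERIV simp: real_differentiable_def)
  then obtain z where z: "a < z" "z < b" "(poly p has_real_derivative 0) (at z)" by blast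
  have "poly (pderiv p) z = 0" using DERIV_unique[OF poly_DERIV z(3)] .
  thus ?thesis using z by blast
qed

lemma dleg_roots:
  assumes N: "N \<ge> 1"
  shows "(\<forall>x. poly (pderiv (legendre N)) x = 0 \<longrightarrow> -1 < x \<and> x < 1)
     \<and> card {x. poly (pderiv (legendre N)) x = 0} = N - 1"
proof -
  obtain m where m: "N = Suc m" using N by (cases N) auto
  define P where "P = legendre N"
  define R where "R = {x. poly P x = 0}"
  define xs where "xs = sorted_list_of_set R"
  have finR: "finite R" unfolding R_def P_def by (rule poly_roots_finite[OF leg_nonzero])
  have cardR: "card R = N" using leg_roots[of m] unfolding R_def P_def m by simp
  have inR: "x \<in> R \<Longrightarrow> -1 < x \<and> x < 1" for x using leg_roots[of m] unfolding R_def P_def m by simp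
  have setxs: "set xs = R" unfolding xs_def using finR by simp
  have lenxs: "length xs = N" unfolding xs_def using cardR by simp
  have sxs: "sorted_wrt (<) xs" unfolding xs_def by simp
  have xsR: "i < N \<Longrightarrow> xs ! i \<in> R" for i using setxs lenxs by auto
  have dP: "pderiv P \<noteq> 0" unfolding P_def pderiv_eq_0_iff using leg_deg[of N] N by simp
  have degdP: "degree (pderiv P) = N - 1" unfolding P_def degree_pderiv using leg_deg[of N] by simp
  have c1: "N - 1 \<le> card {x. poly (pderiv P) x = 0 \<and> xs ! 0 < x \<and> x < xs ! (N - 1)}"
  proof (rule count_roots_gen[OF dP, of "N - 1" "\<lambda>j. xs ! j"])
    fix j assume j: "j < N - 1"
    show "xs ! j < xs ! Suc j" using sxs j lenxs by (simp add: sorted_wrt_nth_less)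
    show "\<exists>z. xs ! j < z \<and> z < xs ! Suc j \<and> poly (pderiv P) z = 0"
      using poly_rolle[of "xs ! j" "xs ! Suc j" P] xsR[of j] xsR[of "Suc j"] j sxs lenxs
      by (simp add: sorted_wrt_nth_less R_def)
  qed
  have b1: "-1 < xs ! 0" using inR[OF xsR[of 0]] N by simp
  have b2: "xs ! (N - 1) < 1" using inR[OF xsR[of "N - 1"]] N by simp
  have sub: "{x. poly (pderiv P) x = 0 \<and> xs ! 0 < x \<and> x < xs ! (N - 1)} \<subseteq> {x. poly (pderiv P) x = 0}" by auto
  have fin: "finite {x. poly (pderiv P) x = 0}" by (rule poly_roots_finite[OF dP])
  have c2: "card {x. poly (pderiv P) x = 0} \<le> N - 1" using card_poly_roots_bound[OF dP] degdP by simp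
  have c3: "card {x. poly (pderiv P) x = 0 \<and> xs ! 0 < x \<and> x < xs ! (N - 1)} \<le> card {x. poly (pderiv P) x = 0}"
    by (rule card_mono[OF fin sub])
  have eq: "{x. poly (pderiv P) x = 0 \<and> xs ! 0 < x \<and> x < xs ! (N - 1)} = {x. poly (pderiv P) x = 0}"
    by (rule card_subset_eq[OF fin sub]) (use c1 c2 c3 in linarith)
  have "\<forall>x. poly (pderiv P) x = 0 \<longrightarrow> -1 < x \<and> x < 1"
  proof (intro allI impI)
    fix x assume "poly (pderiv P) x = 0"
    then have "x \<in> {x. poly (pderiv P) x = 0 \<and> xs ! 0 < x \<and> x < xs ! (N - 1)}" using eq by blast
    then show "-1 < x \<and> x < 1" using b1 b2 by auto
  qed
  then show ?thesis using c1 c2 c3 unfolding P_def by simp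
qed

definition lgl_pi :: "nat \<Rightarrow> real poly" where
  "lgl_pi N = [:1,0,-1:] * pderiv (legendre N)"

lemma poly_lgl_pi: "poly (lgl_pi N) x = (1 - x^2) * poly (pderiv (legendre N)) x"
  unfolding lgl_pi_def by (simp add: power2_eq_square algebra_simps)

lemma lgl_pi_roots:
  assumes N: "N \<ge> 1"
  shows "{x. poly (lgl_pi N) x = 0} = insert (-1) (insert 1 {x. poly (pderiv (legendre N)) x = 0})"
    and "card {x. poly (lgl_pi N) x = 0} = Suc N"
    and "\<And>x. poly (lgl_pi N) x = 0 \<Longrightarrow> -1 \<le> x \<and> x \<le> 1"
    and "lgl_pi N \<noteq> 0" and "degree (lgl_pi N) = Suc N"
proof -
  have z: "(1 - x^2 = 0) \<longleftrightarrow> (x = 1 \<or> x = -1)" for x :: real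
    by (metis abs_one power2_eq_1_iff right_minus_eq)
  show E: "{x. poly (lgl_pi N) x = 0} = insert (-1) (insert 1 {x. poly (pderiv (legendre N)) x = 0})"
    unfolding poly_lgl_pi using z by auto
  note D = dleg_roots[OF N]
  have fin: "finite {x. poly (pderiv (legendre N)) x = 0}"
    by (rule poly_roots_finite) (use leg_deg[of N] N in \<open>simp add: pderiv_eq_0_iff\<close>)
  have n1: "1 \<notin> {x. poly (pderiv (legendre N)) x = 0}" "-1 \<notin> {x. poly (pderiv (legendre N)) x = 0}"
    using D by force+
  show "card {x. poly (lgl_pi N) x = 0} = Suc N"
    unfolding E using fin n1 D N by simp
  show "\<And>x. poly (lgl_pi N) x = 0 \<Longrightarrow> -1 \<le> x \<and> x \<le> 1"
  proof -
    fix x assume "poly (lgl_pi N) x = 0"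
    then have "x \<in> insert (-1) (insert 1 {x. poly (pderiv (legendre N)) x = 0})" using E by blast
    then show "-1 \<le> x \<and> x \<le> 1" using D by fastforce
  qed
  have dP: "pderiv (legendre N) \<noteq> 0" unfolding pderiv_eq_0_iff using leg_deg[of N] N by simp
  show "lgl_pi N \<noteq> 0" unfolding lgl_pi_def using dP no_zero_divisors[of "[:1,0,-1::real:]" "pderiv (legendre N)"] by fastforce
  have "degree (lgl_pi N) = degree [:1,0,-1::real:] + degree (pderiv (legendre N))"
    unfolding lgl_pi_def by (rule degree_mult_eq) (use dP in simp_all)
  also have "\<dots> = Suc N" using leg_deg[of N] N by (simp add: degree_pderiv)
  finally show "degree (lgl_pi N) = Suc N" .
qed


lemma poly_factor_roots:
  fixes p :: "real poly"
  assumes "p \<noteq> 0" "card {x. poly p x = 0} = degree p"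
  shows "p = smult (lead_coeff p) (\<Prod>r\<in>{x. poly p x = 0}. [:-r, 1:])"
proof -
  define R where "R = {x. poly p x = 0}"
  have finR: "finite R" unfolding R_def by (rule poly_roots_finite[OF assms(1)])
  have "S \<subseteq> R \<Longrightarrow> \<exists>q. p = (\<Prod>r\<in>S. [:-r, 1:]) * q" for S
    using finite_subset[OF _ finR, of S]
  proof (induction S rule: infinite_finite_induct)
    case (infinite A) then show ?case by simp
  next
    case empty then show ?case by simp
  next
    case (insert a S)
    then obtain q where q: "p = (\<Prod>r\<in>S. [:-r, 1:]) * q" by auto
    have pa: "poly p a = 0" using insert(4) R_def by auto
    have "poly (\<Prod>r\<in>S. [:-r, 1:]) a \<noteq> 0"
      using insert(2) by (simp add: poly_prod prod_zero_iff[OF insert(1)])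
    then have "poly q a = 0" using pa q by simp
    then obtain q' where q': "q = [:-a, 1:] * q'" using poly_eq_0_iff_dvd by (metis dvdE)
    have "p = (\<Prod>r\<in>insert a S. [:-r, 1:]) * q'"
      using insert(1,2) q q' by (simp add: algebra_simps)
    then show ?case by blast
  qed
  then obtain q where q: "p = (\<Prod>r\<in>R. [:-r, 1:]) * q" by blast
  have nz: "(\<Prod>r\<in>R. [:-r, 1:]) \<noteq> (0 :: real poly)" using finR by (simp add: prod_zero_iff)
  have qnz: "q \<noteq> 0" using q assms(1) by auto
  have dprod: "degree (\<Prod>r\<in>R. [:-r, 1:]) = card R"
    using finR by (subst degree_prod_eq_sum_degree) auto
  have "degree p = degree (\<Prod>r\<in>R. [:-r, 1:]) + degree q"
    using q nz qnz by (metis degree_mult_eq)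
  then have "degree q = 0" using dprod assms(2) R_def by simp
  then obtain c where c: "q = [:c:]" using degree_eq_zeroE by blast
  have lc: "lead_coeff (\<Prod>r\<in>R. [:-r, 1:]) = (1::real)" by (simp add: lead_coeff_prod)
  have lcp: "lead_coeff p = c" using q c lc by (simp add: lead_coeff_mult)
  have e: "p = smult c (\<Prod>r\<in>R. [:-r, 1:])" using q c by simp
  show ?thesis unfolding R_def[symmetric] by (subst lcp) (rule e)
qed

lemma lgl_nodes:
  assumes N: "N \<ge> 1"
  shows "lgl_node N 0 = -1" "lgl_node N N = 1"
    and "\<And>i j. i < j \<Longrightarrow> j \<le> N \<Longrightarrow> lgl_node N i < lgl_node N j"
    and "\<And>i. i \<le> N \<Longrightarrow> poly (lgl_pi N) (lgl_node N i) = 0"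
    and "\<And>i. 0 < i \<Longrightarrow> i < N \<Longrightarrow> poly (pderiv (legendre N)) (lgl_node N i) = 0"
    and "{x. poly (lgl_pi N) x = 0} = lgl_node N ` {0..N}"
    and "inj_on (lgl_node N) {0..N}"
proof -
  define R where "R = {x. poly (lgl_pi N) x = 0}"
  define xs where "xs = sorted_list_of_set R"
  have nd: "lgl_node N i = xs ! i" for i
    unfolding lgl_node_def xs_def R_def lgl_pi_def ..
  have finR: "finite R" unfolding R_def by (rule poly_roots_finite[OF lgl_pi_roots(4)[OF N]])
  have setxs: "set xs = R" unfolding xs_def using finR by simp
  have lenxs: "length xs = Suc N" unfolding xs_def using lgl_pi_roots(2)[OF N] R_def by simp
  have sxs: "sorted_wrt (<) xs" unfolding xs_def by simp
  have inR: "x \<in> R \<Longrightarrow> -1 \<le> x \<and> x \<le> 1" for x using lgl_pi_roots(3)[OF N] R_def by simp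
  have m1: "-1 \<in> R" "1 \<in> R" using lgl_pi_roots(1)[OF N] R_def by auto
  have x0: "xs ! 0 \<in> R" "xs ! N \<in> R" using setxs lenxs nth_mem[of _ xs] by auto
  show n0: "lgl_node N 0 = -1"
    using sorted_nth_first[OF sxs, of "-1"] m1 setxs inR[OF x0(1)] nd by force
  show nN: "lgl_node N N = 1"
    using sorted_nth_last[OF sxs, of "1"] m1 setxs inR[OF x0(2)] nd lenxs by force
  show mono: "\<And>i j. i < j \<Longrightarrow> j \<le> N \<Longrightarrow> lgl_node N i < lgl_node N j"
    using sxs lenxs by (simp add: nd sorted_wrt_nth_less)
  show root: "\<And>i. i \<le> N \<Longrightarrow> poly (lgl_pi N) (lgl_node N i) = 0"
    using setxs lenxs R_def nd by (metis le_imp_less_Suc mem_Collect_eq nth_mem)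
  show "\<And>i. 0 < i \<Longrightarrow> i < N \<Longrightarrow> poly (pderiv (legendre N)) (lgl_node N i) = 0"
  proof -
    fix i assume i: "0 < i" "i < N"
    have "lgl_node N i \<noteq> -1" using mono[of 0 i] i n0 by simp
    moreover have "lgl_node N i \<noteq> 1" using mono[of i N] i nN by simp
    moreover have "lgl_node N i \<in> {x. poly (lgl_pi N) x = 0}" using root[of i] i by simp
    ultimately show "poly (pderiv (legendre N)) (lgl_node N i) = 0"
      using lgl_pi_roots(1)[OF N] by auto
  qed
  show "{x. poly (lgl_pi N) x = 0} = lgl_node N ` {0..N}"
  proof -
    have "set xs = (\<lambda>i. xs ! i) ` {0..N}" using lenxs by (auto simp: set_conv_nth image_def)
    then show ?thesis using setxs R_def nd by simp
  qed
  show "inj_on (lgl_node N) {0..N}"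
  proof (rule inj_onI)
    fix i j assume "i \<in> {0..N}" "j \<in> {0..N}" "lgl_node N i = lgl_node N j"
    then show "i = j" using mono[of i j] mono[of j i] by (cases "i < j"; cases "j < i") auto
  qed
qed


lemma prod_smult_poly:
  fixes f :: "nat \<Rightarrow> real poly"
  shows "finite S \<Longrightarrow> (\<Prod>k\<in>S. smult (a k) (f k)) = smult (\<Prod>k\<in>S. a k) (\<Prod>k\<in>S. f k)"
  by (induction S rule: finite_induct) (simp_all add: mult_smult_left mult_smult_right ac_simps)

lemma pderiv_lin: "pderiv ([:-a,1:] * q) = q + [:-a,1:] * pderiv (q :: real poly)"
proof -
  have d: "pderiv [:-a,1::real:] = 1" by (simp add: pderiv_pCons)
  show ?thesis using pderiv_mult[of "[:-a,1:]" q] unfolding d by (simp only: mult_1_left)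
qed

lemma lgl_pi_deriv_poly: "pderiv (lgl_pi N) = smult (-(real N * (real N + 1))) (legendre N)"
proof -
  have "poly (pderiv (lgl_pi N)) x = poly (smult (-(real N * (real N + 1))) (legendre N)) x" for x
    using leg_ode[of N x] unfolding lgl_pi_def by simp
  then show ?thesis using poly_eq_poly_eq_iff by blast
qed

locale lglN =
  fixes N :: nat
  assumes N: "N \<ge> 1"
begin

abbreviation "xi \<equiv> lgl_node N"
definition "rho = (\<Prod>k\<in>{0..N}. [:- xi k, 1:])"
definition "rhoj j = (\<Prod>k\<in>{0..N} - {j}. [:- xi k, 1:])"
definition "cc = lead_coeff (lgl_pi N)"
definition "KK = -(real N * (real N + 1))"

lemma cc_nz: "cc \<noteq> 0" unfolding cc_def using lgl_pi_roots(4)[OF N] by simp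
lemma KK_nz: "KK \<noteq> 0" unfolding KK_def using N by simp

lemma pi_eq: "lgl_pi N = smult cc rho"
proof -
  have "lgl_pi N = smult cc (\<Prod>r\<in>{x. poly (lgl_pi N) x = 0}. [:-r, 1:])"
    unfolding cc_def
    by (rule poly_factor_roots[OF lgl_pi_roots(4)[OF N]]) (simp add: lgl_pi_roots(2,5)[OF N])
  also have "(\<Prod>r\<in>{x. poly (lgl_pi N) x = 0}. [:-r, 1:]) = rho"
    unfolding lgl_nodes(6)[OF N] rho_def by (rule prod.reindex_cong[OF lgl_nodes(7)[OF N]]) auto
  finally show ?thesis .
qed

lemma drho: "poly (pderiv rho) x = KK / cc * poly (legendre N) x"
proof -
  have "pderiv (lgl_pi N) = smult cc (pderiv rho)" using pi_eq by (simp add: pderiv_smult)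
  then have "smult cc (pderiv rho) = smult KK (legendre N)" using lgl_pi_deriv_poly KK_def by simp
  then have "cc * poly (pderiv rho) x = KK * poly (legendre N) x" by (metis poly_smult)
  then show ?thesis using cc_nz by (simp add: field_simps)
qed

lemma ddrho: "poly (pderiv (pderiv rho)) x = KK / cc * poly (pderiv (legendre N)) x"
proof -
  have "pderiv (lgl_pi N) = smult cc (pderiv rho)" using pi_eq by (simp add: pderiv_smult)
  then have "smult cc (pderiv rho) = smult KK (legendre N)" using lgl_pi_deriv_poly KK_def by simp
  then have "smult cc (pderiv (pderiv rho)) = smult KK (pderiv (legendre N))"
    by (metis pderiv_smult)
  then have "cc * poly (pderiv (pderiv rho)) x = KK * poly (pderiv (legendre N)) x" by (metis poly_smult)
  then show ?thesis using cc_nz by (simp add: field_simps)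
qed

lemma rho_split: "j \<le> N \<Longrightarrow> rho = [:- xi j, 1:] * rhoj j"
  unfolding rho_def rhoj_def by (subst prod.remove[of _ j]) auto

lemma rhoj_at_j: "j \<le> N \<Longrightarrow> poly (rhoj j) (xi j) = (\<Prod>k\<in>{0..N} - {j}. xi j - xi k)"
  unfolding rhoj_def by (simp add: poly_prod)

lemma rhoj_nz: "j \<le> N \<Longrightarrow> poly (rhoj j) (xi j) \<noteq> 0"
proof -
  assume j: "j \<le> N"
  have "xi j - xi k \<noteq> 0" if "k \<in> {0..N} - {j}" for k
    using that j inj_onD[OF lgl_nodes(7)[OF N], of j k] by auto
  then show ?thesis using rhoj_at_j[OF j] by simp
qed

lemma rhoj_at_i: "i \<le> N \<Longrightarrow> i \<noteq> j \<Longrightarrow> poly (rhoj j) (xi i) = 0"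
  unfolding rhoj_def poly_prod by (rule prod_zero) auto

lemma drho_split: "j \<le> N \<Longrightarrow> pderiv rho = rhoj j + [:- xi j, 1:] * pderiv (rhoj j)"
  using rho_split pderiv_lin by simp

lemma ddrho_split: "j \<le> N \<Longrightarrow> pderiv (pderiv rho) = pderiv (rhoj j) + pderiv (rhoj j) + [:- xi j, 1:] * pderiv (pderiv (rhoj j))"
proof -
  assume j: "j \<le> N"
  have "pderiv (pderiv rho) = pderiv (rhoj j) + pderiv ([:- xi j, 1:] * pderiv (rhoj j))"
    unfolding drho_split[OF j] pderiv_add ..
  also have "\<dots> = pderiv (rhoj j) + pderiv (rhoj j) + [:- xi j, 1:] * pderiv (pderiv (rhoj j))"
    unfolding pderiv_lin by (simp add: algebra_simps)
  finally show ?thesis .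
qed

lemma lag_eq: "j \<le> N \<Longrightarrow> lagrange_basis N j = smult (1 / poly (rhoj j) (xi j)) (rhoj j)"
proof -
  assume j: "j \<le> N"
  have "lagrange_basis N j = smult (\<Prod>k\<in>{0..N} - {j}. 1 / (xi j - xi k)) (rhoj j)"
    unfolding lagrange_basis_def rhoj_def by (rule prod_smult_poly) simp
  also have "(\<Prod>k\<in>{0..N} - {j}. 1 / (xi j - xi k)) = 1 / poly (rhoj j) (xi j)"
    unfolding rhoj_at_j[OF j] by (simp add: prod_dividef)
  finally show ?thesis .
qed

lemma D_eq: "j \<le> N \<Longrightarrow> lgl_D N i j = poly (pderiv (rhoj j)) (xi i) / poly (rhoj j) (xi j)"
  unfolding lgl_D_def by (simp add: lag_eq pderiv_smult)

lemma P_nz: "j \<le> N \<Longrightarrow> poly (legendre N) (xi j) \<noteq> 0"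
proof -
  assume j: "j \<le> N"
  have "poly (pderiv rho) (xi j) = poly (rhoj j) (xi j)" using drho_split[OF j] by simp
  then have "KK / cc * poly (legendre N) (xi j) \<noteq> 0" using rhoj_nz[OF j] drho by simp
  then show ?thesis by simp
qed

lemma D_offdiag: "i \<le> N \<Longrightarrow> j \<le> N \<Longrightarrow> i \<noteq> j \<Longrightarrow>
   lgl_D N i j = poly (legendre N) (xi i) / ((xi i - xi j) * poly (legendre N) (xi j))"
proof -
  assume ij: "i \<le> N" "j \<le> N" "i \<noteq> j"
  have ne: "xi i - xi j \<noteq> 0" using ij inj_onD[OF lgl_nodes(7)[OF N], of i j] by auto
  have a: "poly (pderiv rho) (xi i) = (xi i - xi j) * poly (pderiv (rhoj j)) (xi i)"
    unfolding drho_split[OF ij(2)] using rhoj_at_i[OF ij(1,3)] by (simp add: algebra_simps)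
  have b: "poly (pderiv rho) (xi j) = poly (rhoj j) (xi j)" using drho_split[OF ij(2)] by simp
  have "lgl_D N i j = (poly (pderiv rho) (xi i) / (xi i - xi j)) / poly (pderiv rho) (xi j)"
    using D_eq[OF ij(2)] a b ne by simp
  also have "\<dots> = poly (legendre N) (xi i) / ((xi i - xi j) * poly (legendre N) (xi j))"
    unfolding drho using cc_nz KK_nz P_nz[OF ij(1)] P_nz[OF ij(2)] ne by (simp add: field_simps)
  finally show ?thesis .
qed

lemma D_diag: "j \<le> N \<Longrightarrow>
   lgl_D N j j = poly (pderiv (legendre N)) (xi j) / (2 * poly (legendre N) (xi j))"
proof -
  assume j: "j \<le> N"
  have a: "poly (pderiv (pderiv rho)) (xi j) = 2 * poly (pderiv (rhoj j)) (xi j)"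
    using ddrho_split[OF j] by simp
  have b: "poly (pderiv rho) (xi j) = poly (rhoj j) (xi j)" using drho_split[OF j] by simp
  have "lgl_D N j j = (poly (pderiv (pderiv rho)) (xi j) / 2) / poly (pderiv rho) (xi j)"
    using D_eq[OF j] a b by simp
  also have "\<dots> = poly (pderiv (legendre N)) (xi j) / (2 * poly (legendre N) (xi j))"
    unfolding drho ddrho using cc_nz KK_nz P_nz[OF j] by (simp add: field_simps)
  finally show ?thesis .
qed

lemma wd_aux: "(pa::real) \<noteq> 0 \<Longrightarrow> pb \<noteq> 0 \<Longrightarrow> a \<noteq> b \<Longrightarrow> M \<noteq> 0 \<Longrightarrow>
   2 / (M * pa^2) * (pa / ((a - b) * pb)) = - (2 / (M * pb^2) * (pb / ((b - a) * pa)))"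
proof -
  assume h: "(pa::real) \<noteq> 0" "pb \<noteq> 0" "a \<noteq> b" "M \<noteq> 0"
  have e1: "2 / (M * pa^2) * (pa / ((a - b) * pb)) = 2 / (M * (pa * pb) * (a - b))"
    using h by (simp add: field_simps power2_eq_square)
  have e2: "2 / (M * pb^2) * (pb / ((b - a) * pa)) = 2 / (M * (pa * pb) * (b - a))"
    using h by (simp add: field_simps power2_eq_square)
  have e3: "2 / (M * (pa * pb) * (b - a)) = - (2 / (M * (pa * pb) * (a - b)))"
    by (metis minus_diff_eq mult_minus_right divide_minus_right)
  show ?thesis unfolding e1 e2 e3 by simp
qed

lemma SBP_offdiag: "i \<le> N \<Longrightarrow> j \<le> N \<Longrightarrow> i \<noteq> j \<Longrightarrow>
   lgl_weight N i * lgl_D N i j = - (lgl_weight N j * lgl_D N j i)"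
proof -
  assume ij: "i \<le> N" "j \<le> N" "i \<noteq> j"
  have ne: "xi i - xi j \<noteq> 0" using ij inj_onD[OF lgl_nodes(7)[OF N], of i j] by auto
  have pi: "poly (legendre N) (xi i) \<noteq> 0" and pj: "poly (legendre N) (xi j) \<noteq> 0"
    using P_nz ij by auto
  show ?thesis
    unfolding D_offdiag[OF ij] D_offdiag[OF ij(2,1) ij(3)[symmetric]] lgl_weight_def
    using ne pi pj N by (intro wd_aux) auto
qed

lemma dP_pm1: "poly (pderiv (legendre N)) 1 = real N * (real N + 1) / 2"
  "poly (pderiv (legendre N)) (-1) = - ((-1)^N * (real N * (real N + 1)) / 2)"
proof -
  have e: "-2*x*poly (pderiv (legendre N)) x + (1-x^2)*poly (pderiv (pderiv (legendre N))) x
     = -(real N*(real N+1))*poly (legendre N) x" for x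
    using leg_ode[of N x] leg_ode_expand[of N x] by simp
  show "poly (pderiv (legendre N)) 1 = real N * (real N + 1) / 2"
    using e[of 1] leg_pm1[of N] by simp
  show "poly (pderiv (legendre N)) (-1) = - ((-1)^N * (real N * (real N + 1)) / 2)"
  proof -
    define d where "d = poly (pderiv (legendre N)) (-1)"
    define M where "M = real N * (real N + 1)"
    define s :: real where "s = (-1)^N"
    have h: "2 * d = - (M * s)" using e[of "-1"] leg_pm1[of N] unfolding d_def M_def s_def by simp
    have "d = (2 * d) / 2" by simp
    also have "\<dots> = - (s * M / 2)" unfolding h by (simp add: mult.commute)
    finally show ?thesis unfolding d_def M_def s_def .
  qed
qed

lemma SBP_diag: "j \<le> N \<Longrightarrow>
   lgl_weight N j * lgl_D N j j = (if j = N then 1/2 else if j = 0 then -1/2 else 0)"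
proof -
  assume j: "j \<le> N"
  have pj: "poly (legendre N) (xi j) \<noteq> 0" using P_nz j by auto
  have Mnz: "real N * (real N + 1) \<noteq> 0" using N by simp
  consider "j = N" | "j = 0" | "0 < j" "j < N" using j by linarith
  then show ?thesis
  proof cases
    case 1
    then show ?thesis unfolding D_diag[OF j] lgl_weight_def using lgl_nodes(2)[OF N] leg_pm1[of N] dP_pm1 N Mnz
      by simp
  next
    case 2
    define s :: real where "s = (-1)^N"
    define M where "M = real N * (real N + 1)"
    have sq: "s * s = 1" unfolding s_def by (simp flip: power_add)
    have aux: "2 / (M * s^2) * (- (s * M / 2) / (2 * s)) = -1/2"
      using sq Mnz unfolding M_def[symmetric] by (auto simp: field_simps power2_eq_square)
    have "lgl_weight N j * lgl_D N j j = 2 / (M * s^2) * (- (s * M / 2) / (2 * s))"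
      unfolding D_diag[OF j] lgl_weight_def using 2 lgl_nodes(1)[OF N] leg_pm1[of N] dP_pm1(2)
      by (simp add: s_def M_def)
    then show ?thesis using aux 2 N by simp
  next
    case 3
    then show ?thesis unfolding D_diag[OF j] using lgl_nodes(5)[OF N] by simp
  qed
qed

end


lemma volume_identity:
  fixes a X Q :: "nat \<Rightarrow> nat \<Rightarrow> real" and q :: "nat \<Rightarrow> real"
  assumes N: "N \<ge> 1"
    and h1: "\<And>i. i \<le> N \<Longrightarrow> X i i = 0"
    and h2: "\<And>i m. i \<le> N \<Longrightarrow> m \<le> N \<Longrightarrow> X i m - X m i = q m - q i"
    and h3: "\<And>i m. i \<le> N \<Longrightarrow> m \<le> N \<Longrightarrow> i \<noteq> m \<Longrightarrow> a i m = - a m i"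
    and h4: "\<And>i. i \<le> N \<Longrightarrow> (\<Sum>m\<le>N. a i m) = 0"
    and h5: "\<And>i. i \<le> N \<Longrightarrow> a i i = (if i = N then 1/2 else if i = 0 then -1/2 else 0)"
  shows "(\<Sum>i\<le>N. \<Sum>m\<le>N. 2 * a i m * X i m) = q N - q 0"
proof -
  define b where "b i m = (if i = m then 0 else a i m)" for i m
  have bas: "b i m = - b m i" if "i \<le> N" "m \<le> N" for i m
    using h3[OF that] by (cases "i = m") (auto simp: b_def)
  have aX: "(\<Sum>i\<le>N. \<Sum>m\<le>N. a i m * X i m) = (\<Sum>i\<le>N. \<Sum>m\<le>N. b i m * X i m)"
    by (intro sum.cong refl) (auto simp: b_def h1)
  have swap: "(\<Sum>i\<le>N. \<Sum>m\<le>N. b i m * X i m) = - (\<Sum>i\<le>N. \<Sum>m\<le>N. b i m * X m i)"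
  proof -
    have "(\<Sum>i\<le>N. \<Sum>m\<le>N. b i m * X i m) = (\<Sum>m\<le>N. \<Sum>i\<le>N. b i m * X i m)"
      by (rule sum.swap)
    also have "\<dots> = (\<Sum>m\<le>N. \<Sum>i\<le>N. - (b m i * X i m))"
      by (intro sum.cong refl) (metis bas atMost_iff mult_minus_left)
    also have "\<dots> = - (\<Sum>i\<le>N. \<Sum>m\<le>N. b i m * X m i)"
      by (simp only: sum_negf)
    finally show ?thesis .
  qed
  have twoS: "2 * (\<Sum>i\<le>N. \<Sum>m\<le>N. b i m * X i m) = (\<Sum>i\<le>N. \<Sum>m\<le>N. b i m * (q m - q i))"
  proof -
    have "2 * (\<Sum>i\<le>N. \<Sum>m\<le>N. b i m * X i m) = (\<Sum>i\<le>N. \<Sum>m\<le>N. b i m * X i m) - (\<Sum>i\<le>N. \<Sum>m\<le>N. b i m * X m i)"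
      using swap by simp
    also have "\<dots> = (\<Sum>i\<le>N. \<Sum>m\<le>N. b i m * (X i m - X m i))"
      by (simp add: sum_subtractf right_diff_distrib)
    also have "\<dots> = (\<Sum>i\<le>N. \<Sum>m\<le>N. b i m * (q m - q i))"
      by (intro sum.cong refl) (simp add: h2)
    finally show ?thesis .
  qed
  have rowb: "(\<Sum>m\<le>N. b i m) = - a i i" if "i \<le> N" for i
  proof -
    have "(\<Sum>m\<le>N. a i m) = a i i + (\<Sum>m\<in>{..N} - {i}. a i m)"
      using that by (subst sum.remove[of _ i]) auto
    moreover have "(\<Sum>m\<le>N. b i m) = (\<Sum>m\<in>{..N} - {i}. a i m)"
      using that by (subst sum.remove[of _ i]) (auto simp: b_def intro!: sum.cong)
    ultimately show ?thesis using h4[OF that] by simp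
  qed
  have colb: "(\<Sum>i\<le>N. b i m) = a m m" if "m \<le> N" for m
  proof -
    have "(\<Sum>i\<le>N. b i m) = (\<Sum>i\<le>N. - b m i)" by (intro sum.cong refl) (metis bas that atMost_iff)
    also have "\<dots> = a m m" using rowb[OF that] by (simp add: sum_negf)
    finally show ?thesis .
  qed
  have "(\<Sum>i\<le>N. \<Sum>m\<le>N. b i m * (q m - q i)) = (\<Sum>i\<le>N. \<Sum>m\<le>N. b i m * q m) - (\<Sum>i\<le>N. q i * (\<Sum>m\<le>N. b i m))"
    by (simp add: right_diff_distrib sum_subtractf sum_distrib_left mult.commute)
  also have "(\<Sum>i\<le>N. \<Sum>m\<le>N. b i m * q m) = (\<Sum>m\<le>N. q m * a m m)"
  proof -
    have "(\<Sum>i\<le>N. \<Sum>m\<le>N. b i m * q m) = (\<Sum>m\<le>N. \<Sum>i\<le>N. b i m * q m)" by (rule sum.swap)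
    also have "\<dots> = (\<Sum>m\<le>N. (\<Sum>i\<le>N. b i m) * q m)" by (simp add: sum_distrib_right)
    also have "\<dots> = (\<Sum>m\<le>N. q m * a m m)" by (intro sum.cong refl) (simp add: colb)
    finally show ?thesis .
  qed
  also have "(\<Sum>i\<le>N. q i * (\<Sum>m\<le>N. b i m)) = - (\<Sum>i\<le>N. q i * a i i)"
    by (simp add: rowb sum_negf)
  finally have "(\<Sum>i\<le>N. \<Sum>m\<le>N. b i m * (q m - q i)) = 2 * (\<Sum>i\<le>N. q i * a i i)" by simp
  also have "(\<Sum>i\<le>N. q i * a i i) = (\<Sum>i\<le>N. (if i = N then q N / 2 else 0) + (if i = 0 then - q 0 / 2 else 0))"
    using N by (intro sum.cong refl) (auto simp: h5)
  also have "\<dots> = q N / 2 - q 0 / 2"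
    by (simp add: sum.distrib)
  finally have "(\<Sum>i\<le>N. \<Sum>m\<le>N. b i m * (q m - q i)) = q N - q 0" by simp
  then have "2 * (\<Sum>i\<le>N. \<Sum>m\<le>N. a i m * X i m) = q N - q 0" using aX twoS by simp
  then show ?thesis by (simp add: sum_distrib_left mult.assoc)
qed


lemma sum_if_eq: "k \<le> (N::nat) \<Longrightarrow> (\<Sum>i\<le>N. if i = k then (c::real) else 0) = c"
  by (simp add: sum.delta)

lemma part2:
  fixes Uset :: "(real^'n::finite) set" and S :: "real^'n \<Rightarrow> real" and w :: "real^'n \<Rightarrow> real^'n"
    and q :: "real^'n \<Rightarrow> real" and Dm Dp :: "real^'n \<Rightarrow> real^'n \<Rightarrow> real^'n"
    and dx :: "int \<Rightarrow> real" and U U' :: "int \<Rightarrow> nat \<Rightarrow> real \<Rightarrow> real^'n"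
  assumes N: "N \<ge> 1"
    and rowsum: "\<And>i. i \<le> N \<Longrightarrow> (\<Sum>m\<le>N. lgl_D N i m) = 0"
    and C1: "\<forall>u\<in>Uset. Dm u u = 0"
    and C3: "\<forall>a\<in>Uset. \<forall>b\<in>Uset. Dm a b + Dp b a = 0"
    and C4: "\<forall>a\<in>Uset. \<forall>b\<in>Uset. w a \<bullet> Dm a b + w b \<bullet> Dp a b = q b - q a"
    and Sd: "\<forall>u\<in>Uset. (S has_derivative (\<lambda>v. w u \<bullet> v)) (at u)"
    and H2: "\<forall>k i t. i \<le> N \<longrightarrow> U k i t \<in> Uset \<and> (U k i has_vector_derivative U' k i t) (at t)"
    and H3: "\<forall>k i t. i \<le> N \<longrightarrow>
          (lgl_weight N i * (dx k / 2)) *\<^sub>R U' k i t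
          + lgl_weight N i *\<^sub>R (\<Sum>m\<le>N. (2 * lgl_D N i m) *\<^sub>R Dm (U k i t) (U k m t))
          + (if i = 0 then Dp (U (k - 1) N t) (U k 0 t) else 0)
          + (if i = N then Dm (U k N t) (U (k + 1) 0 t) else 0) = 0"
  shows "((\<lambda>t. \<Sum>i\<le>N. lgl_weight N i * (dx k / 2) * S (U k i t)) has_real_derivative
                 ((q (U (k - 1) N t) + w (U (k - 1) N t) \<bullet> Dm (U (k - 1) N t) (U k 0 t))
                - (q (U k N t) + w (U k N t) \<bullet> Dm (U k N t) (U (k + 1) 0 t)))) (at t)"
proof -
  interpret lglN N by unfold_locales (rule N)
  define om where "om i = lgl_weight N i" for i
  define u where "u i = U k i t" for i
  define L where "L = U (k - 1) N t"
  define R where "R = U (k + 1) 0 t"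
  have uU: "i \<le> N \<Longrightarrow> u i \<in> Uset" for i using H2 unfolding u_def by blast
  have LU: "L \<in> Uset" using H2 unfolding L_def by blast
  have d1: "((\<lambda>t. S (U k i t)) has_real_derivative (w (u i) \<bullet> U' k i t)) (at t)" if i: "i \<le> N" for i
  proof -
    have a: "(U k i has_derivative (\<lambda>x. x *\<^sub>R U' k i t)) (at t)"
      using H2 i by (simp add: has_vector_derivative_def)
    have b: "(S has_derivative (\<lambda>v. w (u i) \<bullet> v)) (at (U k i t))"
      using Sd uU[OF i] u_def by simp
    have "((\<lambda>t. S (U k i t)) has_derivative (\<lambda>x. w (u i) \<bullet> (x *\<^sub>R U' k i t))) (at t)"
      by (rule has_derivative_compose[OF a b])
    moreover have "(\<lambda>x. w (u i) \<bullet> (x *\<^sub>R U' k i t)) = (*) (w (u i) \<bullet> U' k i t)"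
      by (auto simp: inner_scaleR_right mult.commute)
    ultimately show ?thesis by (simp add: has_field_derivative_def)
  qed
  have D: "((\<lambda>t. \<Sum>i\<le>N. lgl_weight N i * (dx k / 2) * S (U k i t)) has_real_derivative
       (\<Sum>i\<le>N. lgl_weight N i * (dx k / 2) * (w (u i) \<bullet> U' k i t))) (at t)"
  proof (rule DERIV_sum)
    fix i assume "i \<in> {..N}"
    then show "((\<lambda>t. lgl_weight N i * (dx k / 2) * S (U k i t)) has_real_derivative
       lgl_weight N i * (dx k / 2) * (w (u i) \<bullet> U' k i t)) (at t)"
      by (intro DERIV_cmult d1) simp
  qed
  define X where "X i m = w (u i) \<bullet> Dm (u i) (u m)" for i m
  define a where "a i m = om i * lgl_D N i m" for i m
  have tmi: "lgl_weight N i * (dx k / 2) * (w (u i) \<bullet> U' k i t)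
     = - (\<Sum>m\<le>N. 2 * a i m * X i m) - (if i = 0 then w (u 0) \<bullet> Dp L (u 0) else 0)
       - (if i = N then w (u N) \<bullet> Dm (u N) R else 0)" if i: "i \<le> N" for i
  proof -
    have e: "(lgl_weight N i * (dx k / 2)) *\<^sub>R U' k i t =
       - (lgl_weight N i *\<^sub>R (\<Sum>m\<le>N. (2 * lgl_D N i m) *\<^sub>R Dm (u i) (u m)))
       - (if i = 0 then Dp L (u 0) else 0) - (if i = N then Dm (u N) R else 0)"
      using H3 i unfolding u_def L_def R_def by (simp add: eq_neg_iff_add_eq_0 algebra_simps)
    have "lgl_weight N i * (dx k / 2) * (w (u i) \<bullet> U' k i t) = w (u i) \<bullet> ((lgl_weight N i * (dx k / 2)) *\<^sub>R U' k i t)"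
      by (simp add: inner_scaleR_right)
    also have "\<dots> = - (\<Sum>m\<le>N. 2 * a i m * X i m) - (if i = 0 then w (u 0) \<bullet> Dp L (u 0) else 0)
       - (if i = N then w (u N) \<bullet> Dm (u N) R else 0)"
      unfolding e by (simp add: inner_diff_right inner_sum_right inner_scaleR_right a_def X_def om_def
          sum_distrib_left mult.assoc mult.left_commute)
    finally show ?thesis .
  qed
  have V: "(\<Sum>i\<le>N. \<Sum>m\<le>N. 2 * a i m * X i m) = q (u N) - q (u 0)"
  proof (rule volume_identity[OF N])
    show "\<And>i. i \<le> N \<Longrightarrow> X i i = 0" unfolding X_def using C1 uU by simp
    show "X i m - X m i = q (u m) - q (u i)" if "i \<le> N" "m \<le> N" for i m
    proof -
      have "w (u i) \<bullet> Dm (u i) (u m) + w (u m) \<bullet> Dp (u i) (u m) = q (u m) - q (u i)"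
        using C4 uU that by blast
      moreover have "Dm (u m) (u i) + Dp (u i) (u m) = 0"
        using C3 uU that by blast
      then have "Dm (u m) (u i) = - Dp (u i) (u m)" by (simp add: eq_neg_iff_add_eq_0)
      ultimately show ?thesis unfolding X_def by (simp add: inner_minus_right)
    qed
    show "\<And>i m. i \<le> N \<Longrightarrow> m \<le> N \<Longrightarrow> i \<noteq> m \<Longrightarrow> a i m = - a m i"
      unfolding a_def om_def by (rule SBP_offdiag)
    show "\<And>i. i \<le> N \<Longrightarrow> (\<Sum>m\<le>N. a i m) = 0"
      unfolding a_def by (simp add: sum_distrib_left[symmetric] rowsum)
    show "\<And>i. i \<le> N \<Longrightarrow> a i i = (if i = N then 1/2 else if i = 0 then -1/2 else 0)"
      unfolding a_def om_def by (rule SBP_diag)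
  qed
  have "(\<Sum>i\<le>N. lgl_weight N i * (dx k / 2) * (w (u i) \<bullet> U' k i t))
     = (\<Sum>i\<le>N. - (\<Sum>m\<le>N. 2 * a i m * X i m) - (if i = 0 then w (u 0) \<bullet> Dp L (u 0) else 0)
       - (if i = N then w (u N) \<bullet> Dm (u N) R else 0))"
  proof (rule sum.cong[OF refl])
    fix i assume "i \<in> {..N}"
    then have "i \<le> N" by simp
    then show "lgl_weight N i * (dx k / 2) * (w (u i) \<bullet> U' k i t) = - (\<Sum>m\<le>N. 2 * a i m * X i m) - (if i = 0 then w (u 0) \<bullet> Dp L (u 0) else 0)
       - (if i = N then w (u N) \<bullet> Dm (u N) R else 0)" by (rule tmi)
  qed
  also have "\<dots> = - (q (u N) - q (u 0)) - w (u 0) \<bullet> Dp L (u 0) - w (u N) \<bullet> Dm (u N) R"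
    using N by (simp add: sum_subtractf sum_negf V sum_if_eq)
  also have "\<dots> = (q L + w L \<bullet> Dm L (u 0)) - (q (u N) + w (u N) \<bullet> Dm (u N) R)"
  proof -
    have "w L \<bullet> Dm L (u 0) + w (u 0) \<bullet> Dp L (u 0) = q (u 0) - q L"
      using C4 LU uU[of 0] by blast
    then show ?thesis by simp
  qed
  finally show ?thesis using D unfolding u_def L_def R_def by simp
qed


lemma lin_real_scale: "linear (f :: real \<Rightarrow> 'b::real_vector) \<Longrightarrow> f v = v *\<^sub>R f 1"
  using linear_scale[of f v 1] by simp

lemma smooth_real_seq:
  fixes g :: "real \<Rightarrow> 'b::real_normed_vector"
  assumes "smooth_on UNIV g"
  shows "\<exists>G. G 0 = g \<and> (\<forall>k t. (G k has_vector_derivative G (Suc k) t) (at t))"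
proof -
  obtain F :: "real list \<Rightarrow> real \<Rightarrow> 'b" where F: "\<forall>x\<in>UNIV. F [] x = g x"
    "\<forall>vs. \<forall>x\<in>UNIV. (F vs has_derivative (\<lambda>v. F (v # vs) x)) (at x)"
    using assms unfolding smooth_on_def by blast
  define G where "G k = F (replicate k 1)" for k
  have "G 0 = g" using F(1) by (auto simp: G_def)
  moreover have "(G k has_vector_derivative G (Suc k) t) (at t)" for k t
  proof -
    have d: "(F (replicate k 1) has_derivative (\<lambda>v. F (v # replicate k 1) t)) (at t)" using F(2) by blast
    have lin: "linear (\<lambda>v. F (v # replicate k 1) t)"
      using has_derivative_bounded_linear[OF d] bounded_linear.linear by blast
    have "F (v # replicate k 1) t = v *\<^sub>R F (1 # replicate k 1) t" for v
      using lin_real_scale[OF lin, of v] by simp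
    then have "(\<lambda>v. F (v # replicate k 1) t) = (\<lambda>v. v *\<^sub>R F (1 # replicate k 1) t)"
      by (intro ext)
    then show ?thesis using d by (simp add: G_def has_vector_derivative_def)
  qed
  ultimately show ?thesis by blast
qed

lemma seq_smooth_real:
  fixes G :: "nat \<Rightarrow> real \<Rightarrow> real"
  assumes "\<And>k t. (G k has_real_derivative G (Suc k) t) (at t)"
  shows "smooth_on UNIV (G 0)"
proof -
  define F where "F = (\<lambda>vs x. prod_list vs * G (length vs) x)"
  have "(F vs has_derivative (\<lambda>v. F (v # vs) x)) (at x)" for vs x
  proof -
    have "((\<lambda>x. prod_list vs * G (length vs) x) has_real_derivative prod_list vs * G (Suc (length vs)) x) (at x)"
      by (intro DERIV_cmult assms)
    moreover have "(\<lambda>v. F (v # vs) x) = (*) (prod_list vs * G (Suc (length vs)) x)"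
      by (auto simp: F_def)
    ultimately show ?thesis by (simp add: F_def has_field_derivative_def)
  qed
  moreover have "continuous_on UNIV (F vs)" for vs
    unfolding F_def by (intro continuous_at_imp_continuous_on ballI continuous_intros DERIV_isCont[OF assms])
  moreover have "F [] x = G 0 x" for x by (simp add: F_def)
  ultimately show ?thesis unfolding smooth_on_def by blast
qed

lemma smooth_power: "smooth_on UNIV (\<lambda>x::real. x ^ j)"
proof -
  define G where "G k x = (\<Prod>i<k. real (j - i)) * x ^ (j - k)" for k and x :: real
  have "(G k has_real_derivative G (Suc k) t) (at t)" for k t
  proof -
    have "((\<lambda>x. x ^ (j - k)) has_real_derivative real (j - k) * t ^ (j - k - Suc 0)) (at t)"
      by (rule DERIV_pow)
    then have "(G k has_real_derivative (\<Prod>i<k. real (j - i)) * (real (j - k) * t ^ (j - k - Suc 0))) (at t)"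
      unfolding G_def by (rule DERIV_cmult)
    moreover have "j - k - Suc 0 = j - Suc k" by simp
    moreover have "(\<Prod>i<Suc k. real (j - i)) = (\<Prod>i<k. real (j - i)) * real (j - k)"
      by (simp only: prod.lessThan_Suc)
    ultimately have "(G k has_real_derivative (\<Prod>i<Suc k. real (j - i)) * t ^ (j - Suc k)) (at t)"
      by (simp only: mult.assoc)
    then show ?thesis by (simp only: G_def)
  qed
  then have "smooth_on UNIV (G 0)" by (rule seq_smooth_real)
  moreover have "G 0 = (\<lambda>x. x ^ j)" by (auto simp: G_def)
  ultimately show ?thesis by simp
qed

lemma deriv_power: "deriv (\<lambda>x::real. x ^ j) y = real j * y ^ (j - 1)"
  using DERIV_imp_deriv[OF DERIV_pow[of j y]] by simp

lemma small_const_zero: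
  fixes K c :: real
  assumes "\<exists>d>0. \<forall>h. 0 < h \<and> h < d \<longrightarrow> \<bar>K\<bar> \<le> c * h"
  shows "K = 0"
proof (rule ccontr)
  assume K: "K \<noteq> 0"
  obtain d where d: "d > 0" "\<forall>h. 0 < h \<and> h < d \<longrightarrow> \<bar>K\<bar> \<le> c * h" using assms by blast
  have c: "c > 0"
  proof (rule ccontr)
    assume "\<not> c > 0"
    then have "c * (d/2) \<le> 0" using d(1) by (simp add: mult_nonpos_nonneg)
    then show False using d(2)[rule_format, of "d/2"] d(1) K by simp
  qed
  define h where "h = min (d/2) (\<bar>K\<bar> / (2 * c))"
  have h: "0 < h" "h < d" using d K c by (auto simp: h_def)
  have "c * h \<le> \<bar>K\<bar> / 2" using c by (simp add: h_def min_def field_simps)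
  then show False using d(2) h K by fastforce
qed

lemma bigo_power_coeff_zero:
  fixes K :: real
  assumes "(\<lambda>h. K * h ^ a) \<in> O[at_right 0](\<lambda>h. h ^ p)" "a < p"
  shows "K = 0"
proof -
  obtain c where c: "c > 0" "eventually (\<lambda>h. norm (K * h ^ a) \<le> c * norm (h ^ p)) (at_right (0::real))"
    using landau_o.bigE[OF assms(1)] by blast
  then obtain b where b: "b > 0" "\<forall>h>0. h < b \<longrightarrow> norm (K * h ^ a) \<le> c * norm (h ^ p)"
    unfolding eventually_at_right_field by auto
  show ?thesis
  proof (rule small_const_zero, intro exI conjI allI impI)
    show "min b 1 > 0" using b by simp
    fix h :: real assume h: "0 < h \<and> h < min b 1"
    have "\<bar>K\<bar> * h ^ a \<le> c * h ^ p" using b(2)[rule_format, of h] h by (simp add: abs_mult)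
    also have "h ^ p = h ^ a * h ^ (p - a)" using assms(2) by (simp flip: power_add)
    also have "h ^ (p - a) \<le> h" using h assms(2) by (intro power_le_one_iff[THEN iffD2] order.trans[OF power_decreasing[of 1 "p - a" h]]) auto
    then have "c * (h ^ a * h ^ (p - a)) \<le> c * (h ^ a * h)" using c h by (intro mult_left_mono) auto
    finally have "h ^ a * \<bar>K\<bar> \<le> h ^ a * (c * h)" by (simp add: algebra_simps)
    then show "\<bar>K\<bar> \<le> c * h" using h by (simp add: mult_le_cancel_left_pos)
  qed
qed

lemma bigo_inv_coeff_zero:
  fixes K :: real
  assumes "(\<lambda>h. K / h) \<in> O[at_right 0](\<lambda>h. h ^ p)"
  shows "K = 0"
proof -
  obtain c where c: "c > 0" "eventually (\<lambda>h. norm (K / h) \<le> c * norm (h ^ p)) (at_right (0::real))"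
    using landau_o.bigE[OF assms(1)] by blast
  then obtain b where b: "b > 0" "\<forall>h>0. h < b \<longrightarrow> norm (K / h) \<le> c * norm (h ^ p)"
    unfolding eventually_at_right_field by auto
  show ?thesis
  proof (rule small_const_zero, intro exI conjI allI impI)
    show "min b 1 > 0" using b by simp
    fix h :: real assume h: "0 < h \<and> h < min b 1"
    have "\<bar>K\<bar> / h \<le> c * h ^ p" using b(2)[rule_format, of h] h by simp
    then have "\<bar>K\<bar> \<le> c * h ^ p * h" using h by (simp add: divide_le_eq)
    also have "h ^ p \<le> 1" using h by (simp add: power_le_one)
    then have "c * h ^ p * h \<le> c * 1 * h" using c h by (intro mult_right_mono mult_left_mono) auto
    finally show "\<bar>K\<bar> \<le> c * h" by simp
  qed
qed


lemma D_exact: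
  assumes DA: "\<forall>g i c. smooth_on UNIV g \<and> i \<le> N \<longrightarrow>
        (\<lambda>h. (1 / h) * (\<Sum>m\<le>N. lgl_D N i m * g (c + h * lgl_node N m))
              - deriv g (c + h * lgl_node N i)) \<in> O[at_right 0](\<lambda>h. h ^ p)"
    and i: "i \<le> N" and j: "j \<le> p"
  shows "(\<Sum>m\<le>N. lgl_D N i m * lgl_node N m ^ j) = real j * lgl_node N i ^ (j - 1)"
proof -
  define S where "S = (\<Sum>m\<le>N. lgl_D N i m * lgl_node N m ^ j)"
  define f where "f = (\<lambda>h::real. (1 / h) * (\<Sum>m\<le>N. lgl_D N i m * (0 + h * lgl_node N m) ^ j)
              - deriv (\<lambda>x::real. x ^ j) (0 + h * lgl_node N i))"
  have fO: "f \<in> O[at_right 0](\<lambda>h. h ^ p)"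
    using DA[rule_format, of "\<lambda>x. x ^ j" i 0] smooth_power i unfolding f_def by blast
  have sumh: "(\<Sum>m\<le>N. lgl_D N i m * (0 + h * lgl_node N m) ^ j) = h ^ j * S" for h
    unfolding S_def by (simp add: sum_distrib_left power_mult_distrib algebra_simps)
  show ?thesis
  proof (cases j)
    case 0
    have "f h = S / h" for h unfolding f_def sumh deriv_power using 0 by simp
    then have "(\<lambda>h. S / h) \<in> O[at_right 0](\<lambda>h. h ^ p)" using fO by (metis ext)
    then have "S = 0" by (rule bigo_inv_coeff_zero)
    then show ?thesis using 0 S_def by simp
  next
    case (Suc j')
    define K where "K = S - real j * lgl_node N i ^ (j - 1)"
    have "eventually (\<lambda>h. f h = K * h ^ j') (at_right (0::real))"
    proof -
      have "f h = K * h ^ j'" if "h > 0" for h :: real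
      proof -
        have a: "(1/h) * (h ^ j * S) = h ^ j' * S" using that Suc by simp
        have "f h = h ^ j' * S - real j * (h * lgl_node N i) ^ j'"
          unfolding f_def sumh deriv_power a using Suc by simp
        also have "\<dots> = K * h ^ j'" unfolding K_def using Suc by (simp add: power_mult_distrib algebra_simps)
        finally show ?thesis .
      qed
      then show ?thesis unfolding eventually_at_right_field by (intro exI[of _ 1]) auto
    qed
    then have "(\<lambda>h. K * h ^ j') \<in> O[at_right 0](\<lambda>h. h ^ p)"
      using fO landau_o.big.in_cong[of f "\<lambda>h. K * h ^ j'" "at_right 0" "\<lambda>h. h ^ p"] by simp
    then have "K = 0" by (rule bigo_power_coeff_zero) (use Suc j in simp)
    then show ?thesis unfolding K_def S_def by simp
  qed
qed

lemma D_rowsum: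
  assumes DA: "\<forall>g i c. smooth_on UNIV g \<and> i \<le> N \<longrightarrow>
        (\<lambda>h. (1 / h) * (\<Sum>m\<le>N. lgl_D N i m * g (c + h * lgl_node N m))
              - deriv g (c + h * lgl_node N i)) \<in> O[at_right 0](\<lambda>h. h ^ p)"
    and i: "i \<le> N"
  shows "(\<Sum>m\<le>N. lgl_D N i m) = 0"
  using D_exact[OF DA i, of 0] by simp


locale sfam =
  fixes A :: "'a::euclidean_space set" and F :: "'a list \<Rightarrow> 'a \<Rightarrow> 'b::real_normed_vector"
  assumes A_open: "open A"
    and Fd: "\<And>vs x. x \<in> A \<Longrightarrow> (F vs has_derivative (\<lambda>v. F (v # vs) x)) (at x)"
    and Fc: "\<And>vs. continuous_on A (F vs)"
begin

lemma deriv_eq_on_open: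
  assumes x: "x \<in> A" and eq: "\<And>y. y \<in> A \<Longrightarrow> f y = g y"
    and df: "(f has_derivative f') (at x)" and dg: "(g has_derivative g') (at x)"
  shows "f' = g'"
proof -
  have "(g has_derivative f') (at x)"
    by (rule has_derivative_transform_within_open[OF df A_open x]) (use eq in auto)
  then show ?thesis using has_derivative_unique dg by blast
qed

lemma lin_pos: "x \<in> A \<Longrightarrow> linear (\<lambda>v. F (pre @ v # post) x)"
proof (induction pre arbitrary: x)
  case Nil
  then show ?case using Fd[OF Nil, of post] has_derivative_bounded_linear bounded_linear.linear by fastforce
next
  case (Cons u pre)
  show ?case
  proof (rule linearI)
    fix v1 v2
    have e: "(\<lambda>w. F (w # pre @ (v1 + v2) # post) x) = (\<lambda>w. F (w # pre @ v1 # post) x + F (w # pre @ v2 # post) x)"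
    proof (rule deriv_eq_on_open[OF Cons.prems, of "F (pre @ (v1 + v2) # post)" "\<lambda>y. F (pre @ v1 # post) y + F (pre @ v2 # post) y"])
      show "F (pre @ (v1 + v2) # post) y = F (pre @ v1 # post) y + F (pre @ v2 # post) y" if "y \<in> A" for y
        using linear_add[OF Cons.IH[OF that]] by simp
      show "(F (pre @ (v1 + v2) # post) has_derivative (\<lambda>w. F (w # pre @ (v1 + v2) # post) x)) (at x)"
        using Fd[OF Cons.prems] .
      show "((\<lambda>y. F (pre @ v1 # post) y + F (pre @ v2 # post) y) has_derivative
          (\<lambda>w. F (w # pre @ v1 # post) x + F (w # pre @ v2 # post) x)) (at x)"
        by (intro has_derivative_add Fd[OF Cons.prems])
    qed
    show "F ((u # pre) @ (v1 + v2) # post) x = F ((u # pre) @ v1 # post) x + F ((u # pre) @ v2 # post) x"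
      using fun_cong[OF e, of u] by simp
  next
    fix c v
    have e: "(\<lambda>w. F (w # pre @ (c *\<^sub>R v) # post) x) = (\<lambda>w. c *\<^sub>R F (w # pre @ v # post) x)"
    proof (rule deriv_eq_on_open[OF Cons.prems, of "F (pre @ (c *\<^sub>R v) # post)" "\<lambda>y. c *\<^sub>R F (pre @ v # post) y"])
      show "F (pre @ (c *\<^sub>R v) # post) y = c *\<^sub>R F (pre @ v # post) y" if "y \<in> A" for y
        using linear_scale[OF Cons.IH[OF that]] by simp
      show "(F (pre @ (c *\<^sub>R v) # post) has_derivative (\<lambda>w. F (w # pre @ (c *\<^sub>R v) # post) x)) (at x)"
        using Fd[OF Cons.prems] .
      show "((\<lambda>y. c *\<^sub>R F (pre @ v # post) y) has_derivative (\<lambda>w. c *\<^sub>R F (w # pre @ v # post) x)) (at x)"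
        by (intro has_derivative_scaleR_right Fd[OF Cons.prems])
    qed
    show "F ((u # pre) @ (c *\<^sub>R v) # post) x = c *\<^sub>R F ((u # pre) @ v # post) x"
      using fun_cong[OF e, of u] by simp
  qed
qed

lemma expand_pos: "x \<in> A \<Longrightarrow> F (pre @ v # post) x = (\<Sum>e\<in>Basis. (v \<bullet> e) *\<^sub>R F (pre @ e # post) x)"
proof -
  assume x: "x \<in> A"
  note L = lin_pos[OF x, of pre post]
  have "F (pre @ v # post) x = F (pre @ (\<Sum>e\<in>Basis. (v \<bullet> e) *\<^sub>R e) # post) x"
    by (simp add: euclidean_representation)
  also have "\<dots> = (\<Sum>e\<in>Basis. (v \<bullet> e) *\<^sub>R F (pre @ e # post) x)"
    using linear_sum[OF L, of "\<lambda>e. (v \<bullet> e) *\<^sub>R e" Basis] linear_scale[OF L] by simp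
  finally show ?thesis .
qed

lemma F_cont_dirs:
  fixes S :: "'p::topological_space set" and bs :: "('p \<Rightarrow> 'a) list" and y :: "'p \<Rightarrow> 'a"
  assumes bs: "\<forall>b\<in>set bs. continuous_on S b" and y: "continuous_on S y" "y ` S \<subseteq> A"
  shows "continuous_on S (\<lambda>z. F (pre @ map (\<lambda>b. b z) bs) (y z))"
  using bs
proof (induction bs arbitrary: pre)
  case Nil
  then show ?case using continuous_on_compose2[OF Fc y(1) y(2)] by simp
next
  case (Cons b bs)
  have eq: "F (pre @ map (\<lambda>b. b z) (b # bs)) (y z) =
      (\<Sum>e\<in>Basis. (b z \<bullet> e) *\<^sub>R F (pre @ e # map (\<lambda>b. b z) bs) (y z))" if "z \<in> S" for z
    using expand_pos[of "y z" pre "b z" "map (\<lambda>b. b z) bs"] y(2) that by auto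
  have ih: "continuous_on S (\<lambda>z. F (pre @ e # map (\<lambda>b. b z) bs) (y z))" for e
    using Cons.IH[of "pre @ [e]"] Cons.prems by simp
  have cb: "continuous_on S b" using Cons.prems by simp
  have "continuous_on S (\<lambda>z. \<Sum>e\<in>Basis. (b z \<bullet> e) *\<^sub>R F (pre @ e # map (\<lambda>b. b z) bs) (y z))"
    by (intro continuous_on_sum continuous_on_scaleR continuous_on_inner cb continuous_on_const ih)
  moreover have "continuous_on S (\<lambda>z. F (pre @ map (\<lambda>b. b z) (b # bs)) (y z))
     = continuous_on S (\<lambda>z. \<Sum>e\<in>Basis. (b z \<bullet> e) *\<^sub>R F (pre @ e # map (\<lambda>b. b z) bs) (y z))"
    by (rule continuous_on_cong[OF refl eq])
  ultimately show ?case by (simp only:)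
qed

lemma inner_const_deriv:
  "(f has_vector_derivative f') (at t) \<Longrightarrow> ((\<lambda>t. f t \<bullet> e) has_real_derivative (f' \<bullet> e)) (at t)"
proof -
  assume "(f has_vector_derivative f') (at t)"
  then have "((\<lambda>t. f t \<bullet> e) has_derivative (\<lambda>x. (x *\<^sub>R f') \<bullet> e)) (at t)"
    unfolding has_vector_derivative_def by (rule has_derivative_inner_left)
  moreover have "(\<lambda>x. (x *\<^sub>R f') \<bullet> e) = (*) (f' \<bullet> e)" by (auto simp: mult.commute)
  ultimately show ?thesis unfolding has_field_derivative_def by simp
qed

lemma F_deriv_dirs:
  fixes V :: "nat \<Rightarrow> real \<Rightarrow> 'a" and y :: "real \<Rightarrow> 'a"
  assumes V: "\<And>k t. (V k has_vector_derivative V (Suc k) t) (at t)"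
    and yd: "\<And>t. (y has_vector_derivative V 1 t) (at t)" and yA: "\<And>t. y t \<in> A"
  shows "((\<lambda>t. F (pre @ map (\<lambda>k. V k t) ks) (y t)) has_vector_derivative
     (F (V 1 t # pre @ map (\<lambda>k. V k t) ks) (y t)
      + (\<Sum>i<length ks. F (pre @ map (\<lambda>k. V k t) (ks[i := Suc (ks ! i)])) (y t)))) (at t)"
proof (induction ks arbitrary: pre)
  case Nil
  have d1: "(y has_derivative (\<lambda>x. x *\<^sub>R V 1 t)) (at t)" using yd unfolding has_vector_derivative_def .
  have "((\<lambda>t. F pre (y t)) has_derivative (\<lambda>x. F ((x *\<^sub>R V 1 t) # pre) (y t))) (at t)"
    by (rule has_derivative_compose[OF d1 Fd[OF yA]])
  moreover have "(\<lambda>x. F ((x *\<^sub>R V 1 t) # pre) (y t)) = (\<lambda>x. x *\<^sub>R F (V 1 t # pre) (y t))"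
    using linear_scale[OF lin_pos[OF yA, of "[]" pre]] by auto
  ultimately show ?case by (simp add: has_vector_derivative_def)
next
  case (Cons k ks)
  define rest where "rest t = map (\<lambda>k. V k t) ks" for t
  define G where "G e t = F ((pre @ [e]) @ rest t) (y t)" for e t
  define DG where "DG e = F (V 1 t # (pre @ [e]) @ rest t) (y t)
      + (\<Sum>i<length ks. F ((pre @ [e]) @ map (\<lambda>k. V k t) (ks[i := Suc (ks ! i)])) (y t))" for e
  have eq: "F (pre @ map (\<lambda>k. V k t) (k # ks)) (y t) = (\<Sum>e\<in>Basis. (V k t \<bullet> e) *\<^sub>R G e t)" for t
    using expand_pos[OF yA, of pre "V k t" "rest t"] unfolding G_def rest_def by simp
  have dG: "(G e has_vector_derivative DG e) (at t)" for e
    using Cons.IH[of "pre @ [e]"] unfolding G_def DG_def rest_def .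
  have "((\<lambda>t. \<Sum>e\<in>Basis. (V k t \<bullet> e) *\<^sub>R G e t) has_vector_derivative
      (\<Sum>e\<in>Basis. (V k t \<bullet> e) *\<^sub>R DG e + (V (Suc k) t \<bullet> e) *\<^sub>R G e t)) (at t)"
    by (intro has_vector_derivative_sum has_vector_derivative_scaleR inner_const_deriv V dG)
  moreover have "(\<Sum>e\<in>Basis. (V k t \<bullet> e) *\<^sub>R DG e + (V (Suc k) t \<bullet> e) *\<^sub>R G e t)
     = F (V 1 t # pre @ map (\<lambda>k. V k t) (k # ks)) (y t)
      + (\<Sum>i<length (k # ks). F (pre @ map (\<lambda>k. V k t) ((k # ks)[i := Suc ((k # ks) ! i)])) (y t))"
  proof -
    have s1: "(\<Sum>e\<in>Basis. (V k t \<bullet> e) *\<^sub>R F (V 1 t # (pre @ [e]) @ rest t) (y t))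
        = F (V 1 t # pre @ map (\<lambda>k. V k t) (k # ks)) (y t)"
      using expand_pos[OF yA, of "V 1 t # pre" "V k t" "rest t"] by (simp add: rest_def)
    have s2: "(\<Sum>e\<in>Basis. (V k t \<bullet> e) *\<^sub>R (\<Sum>i<length ks. F ((pre @ [e]) @ map (\<lambda>k. V k t) (ks[i := Suc (ks ! i)])) (y t)))
        = (\<Sum>i<length ks. F (pre @ V k t # map (\<lambda>k. V k t) (ks[i := Suc (ks ! i)])) (y t))"
    proof -
      have "(\<Sum>e\<in>Basis. (V k t \<bullet> e) *\<^sub>R (\<Sum>i<length ks. F ((pre @ [e]) @ map (\<lambda>k. V k t) (ks[i := Suc (ks ! i)])) (y t)))
          = (\<Sum>i<length ks. \<Sum>e\<in>Basis. (V k t \<bullet> e) *\<^sub>R F (pre @ e # map (\<lambda>k. V k t) (ks[i := Suc (ks ! i)])) (y t))"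
        by (simp add: scaleR_sum_right sum.swap[of _ Basis])
      also have "\<dots> = (\<Sum>i<length ks. F (pre @ V k t # map (\<lambda>k. V k t) (ks[i := Suc (ks ! i)])) (y t))"
        by (intro sum.cong refl) (rule expand_pos[OF yA, symmetric])
      finally show ?thesis .
    qed
    have s3: "(\<Sum>e\<in>Basis. (V (Suc k) t \<bullet> e) *\<^sub>R G e t) = F (pre @ V (Suc k) t # rest t) (y t)"
      using expand_pos[OF yA, of pre "V (Suc k) t" "rest t"] unfolding G_def by simp
    have "(\<Sum>e\<in>Basis. (V k t \<bullet> e) *\<^sub>R DG e + (V (Suc k) t \<bullet> e) *\<^sub>R G e t)
       = F (V 1 t # pre @ map (\<lambda>k. V k t) (k # ks)) (y t)
        + (\<Sum>i<length ks. F (pre @ V k t # map (\<lambda>k. V k t) (ks[i := Suc (ks ! i)])) (y t))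
        + F (pre @ V (Suc k) t # rest t) (y t)"
      unfolding DG_def sum.distrib scaleR_add_right s1 s2 s3 ..
    also have "\<dots> = F (V 1 t # pre @ map (\<lambda>k. V k t) (k # ks)) (y t)
      + (\<Sum>i<length (k # ks). F (pre @ map (\<lambda>k. V k t) ((k # ks)[i := Suc ((k # ks) ! i)])) (y t))"
    proof -
      have "(\<Sum>i<length (k # ks). F (pre @ map (\<lambda>k. V k t) ((k # ks)[i := Suc ((k # ks) ! i)])) (y t))
        = F (pre @ map (\<lambda>k. V k t) ((k # ks)[0 := Suc ((k # ks) ! 0)])) (y t)
          + (\<Sum>i<length ks. F (pre @ map (\<lambda>k. V k t) ((k # ks)[Suc i := Suc ((k # ks) ! Suc i)])) (y t))"
        by (simp only: length_Cons sum.lessThan_Suc_shift)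
      also have "\<dots> = F (pre @ V (Suc k) t # rest t) (y t)
          + (\<Sum>i<length ks. F (pre @ V k t # map (\<lambda>k. V k t) (ks[i := Suc (ks ! i)])) (y t))"
        by (simp add: rest_def)
      finally show ?thesis by simp
    qed
    finally show ?thesis .
  qed
  ultimately show ?case using eq by simp
qed

end


fun fdb :: "nat \<Rightarrow> nat list list" where
  "fdb 0 = [[]]"
| "fdb (Suc j) = concat (map (\<lambda>ks. (1 # ks) # map (\<lambda>i. ks[i := Suc (ks ! i)]) [0..<length ks]) (fdb j))"

lemma sum_list_map_concat: "sum_list (map f (concat xss)) = sum_list (map (\<lambda>xs. sum_list (map f xs)) xss)"
  by (induction xss) simp_all

lemma sum_list_map_upt: "sum_list (map f [0..<n]) = (\<Sum>i<n. f i)"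
  by (induction n) simp_all

lemma sum_list_vderiv:
  assumes "\<And>x. x \<in> set xs \<Longrightarrow> ((\<lambda>t. f x t) has_vector_derivative f' x) (at t)"
  shows "((\<lambda>t. sum_list (map (\<lambda>x. f x t) xs)) has_vector_derivative sum_list (map f' xs)) (at t)"
  using assms by (induction xs) (auto intro: has_vector_derivative_add)

lemma sum_list_cont:
  assumes "\<And>x. x \<in> set xs \<Longrightarrow> continuous_on S (\<lambda>z. f x z)"
  shows "continuous_on S (\<lambda>z. sum_list (map (\<lambda>x. f x z) xs) :: 'b::real_normed_vector)"
  using assms by (induction xs) (auto intro: continuous_on_add)

context sfam
begin

definition Lam :: "nat \<Rightarrow> (nat \<Rightarrow> real \<Rightarrow> 'a) \<Rightarrow> (real \<Rightarrow> 'a) \<Rightarrow> real \<Rightarrow> 'b" where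
  "Lam j V y t = sum_list (map (\<lambda>ks. F (map (\<lambda>k. V k t) ks) (y t)) (fdb j))"

lemma Lam_deriv:
  fixes V :: "nat \<Rightarrow> real \<Rightarrow> 'a" and y :: "real \<Rightarrow> 'a"
  assumes V: "\<And>k t. (V k has_vector_derivative V (Suc k) t) (at t)"
    and yd: "\<And>t. (y has_vector_derivative V 1 t) (at t)" and yA: "\<And>t. y t \<in> A"
  shows "(Lam j V y has_vector_derivative Lam (Suc j) V y t) (at t)"
proof -
  have "((\<lambda>t. sum_list (map (\<lambda>ks. F (map (\<lambda>k. V k t) ks) (y t)) (fdb j))) has_vector_derivative
     sum_list (map (\<lambda>ks. F (V 1 t # [] @ map (\<lambda>k. V k t) ks) (y t)
      + (\<Sum>i<length ks. F ([] @ map (\<lambda>k. V k t) (ks[i := Suc (ks ! i)])) (y t))) (fdb j))) (at t)"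
    by (rule sum_list_vderiv) (use F_deriv_dirs[OF V yd yA, of "[]"] in simp)
  moreover have "Lam (Suc j) V y t = sum_list (map (\<lambda>ks. F (V 1 t # [] @ map (\<lambda>k. V k t) ks) (y t)
      + (\<Sum>i<length ks. F ([] @ map (\<lambda>k. V k t) (ks[i := Suc (ks ! i)])) (y t))) (fdb j))"
    unfolding Lam_def fdb.simps sum_list_map_concat
    by (simp add: sum_list_map_upt o_def)
  ultimately show ?thesis unfolding Lam_def[abs_def] by simp
qed

lemma Lam_cont:
  fixes S :: "'p::topological_space set" and V :: "nat \<Rightarrow> real \<Rightarrow> 'a" and Y :: "'p \<Rightarrow> 'a" and T :: "'p \<Rightarrow> real"
  assumes V: "\<And>k. continuous_on UNIV (V k)" and T: "continuous_on S T"
    and Y: "continuous_on S Y" "Y ` S \<subseteq> A"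
  shows "continuous_on S (\<lambda>z. sum_list (map (\<lambda>ks. F (map (\<lambda>k. V k (T z)) ks) (Y z)) (fdb j)))"
proof (rule sum_list_cont)
  fix ks
  have "continuous_on S (\<lambda>z. F ([] @ map (\<lambda>b. b z) (map (\<lambda>k z. V k (T z)) ks)) (Y z))"
  proof (rule F_cont_dirs[OF _ Y])
    show "\<forall>b\<in>set (map (\<lambda>k z. V k (T z)) ks). continuous_on S b"
      using continuous_on_compose2[OF V T] by auto
  qed
  then show "continuous_on S (\<lambda>z. F (map (\<lambda>k. V k (T z)) ks) (Y z))" by (simp add: o_def)
qed

end

lemma taylor_vec_bound:
  fixes f :: "nat \<Rightarrow> real \<Rightarrow> real^'n"
  assumes fd: "\<And>m t. m < n \<Longrightarrow> (f m has_vector_derivative f (Suc m) t) (at t)"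
    and ab: "a \<le> c" "c \<le> b" "a \<le> x" "x \<le> b"
    and B: "\<And>t. t \<in> {a..b} \<Longrightarrow> norm (f n t) \<le> B"
  shows "norm (f 0 x - (\<Sum>m<n. ((x - c) ^ m / fact m) *\<^sub>R f m c)) \<le> real CARD('n) * B * \<bar>x - c\<bar> ^ n / fact n"
proof -
  have B0: "B \<ge> 0" using B[of c] ab by (meson atLeastAtMost_iff norm_ge_zero order_trans)
  have card1: "real CARD('n) \<ge> 1" by simp
  show ?thesis
  proof (cases "n = 0")
    case True
    have "norm (f 0 x) \<le> B" using B[of x] True ab by simp
    also have "B \<le> real CARD('n) * B" using B0 card1 by (simp add: mult_le_cancel_right1)
    finally show ?thesis using True by simp
  next
    case False
    show ?thesis
    proof (cases "x = c")
      case True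
      obtain n' where n': "n = Suc n'" using False by (cases n) auto
      have "(\<Sum>m<n. ((x - c) ^ m / fact m) *\<^sub>R f m c) = f 0 c"
        unfolding n' sum.lessThan_Suc_shift using True by simp
      then have "f 0 x - (\<Sum>m<n. ((x - c) ^ m / fact m) *\<^sub>R f m c) = 0" using True by simp
      then show ?thesis using B0 by simp
    next
      case xc: False
      have comp: "\<bar>(f 0 x - (\<Sum>m<n. ((x - c) ^ m / fact m) *\<^sub>R f m c)) $ j\<bar> \<le> B * \<bar>x - c\<bar> ^ n / fact n" for j
      proof -
        have dj: "((\<lambda>t. f m t $ j) has_real_derivative f (Suc m) t $ j) (at t)" if "m < n" for m t
        proof -
          have "((\<lambda>t. f m t $ j) has_derivative (\<lambda>h. (h *\<^sub>R f (Suc m) t) $ j)) (at t)"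
            using bounded_linear.has_derivative[OF bounded_linear_vec_nth fd[OF that, unfolded has_vector_derivative_def]] .
          moreover have "(\<lambda>h. (h *\<^sub>R f (Suc m) t) $ j) = (*) (f (Suc m) t $ j)" by (auto simp: mult.commute)
          ultimately show ?thesis unfolding has_field_derivative_def by simp
        qed
        obtain th where th: "(if x < c then x < th \<and> th < c else c < th \<and> th < x)"
          "f 0 x $ j = (\<Sum>m<n. f m c $ j / fact m * (x - c) ^ m) + f n th $ j / fact n * (x - c) ^ n"
          using Taylor[of n "\<lambda>m t. f m t $ j" "\<lambda>t. f 0 t $ j" a b c x] False dj ab xc by auto
        have thab: "th \<in> {a..b}" using th(1) ab by (auto split: if_splits)
        have "(f 0 x - (\<Sum>m<n. ((x - c) ^ m / fact m) *\<^sub>R f m c)) $ j = f n th $ j / fact n * (x - c) ^ n"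
          using th(2) by (simp add: sum_component vector_minus_component algebra_simps)
        also have "\<bar>\<dots>\<bar> = \<bar>f n th $ j\<bar> * \<bar>x - c\<bar> ^ n / fact n" by (simp add: abs_mult power_abs)
        also have "\<dots> \<le> B * \<bar>x - c\<bar> ^ n / fact n"
          using order_trans[OF component_le_norm_cart B[OF thab]] by (intro divide_right_mono mult_right_mono) auto
        finally show ?thesis .
      qed
      have "norm (f 0 x - (\<Sum>m<n. ((x - c) ^ m / fact m) *\<^sub>R f m c)) \<le>
          (\<Sum>j\<in>UNIV. \<bar>(f 0 x - (\<Sum>m<n. ((x - c) ^ m / fact m) *\<^sub>R f m c)) $ j\<bar>)"
        by (rule norm_le_l1_cart)
      also have "\<dots> \<le> (\<Sum>j\<in>(UNIV::'n set). B * \<bar>x - c\<bar> ^ n / fact n)" by (intro sum_mono comp)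
      also have "\<dots> = real CARD('n) * B * \<bar>x - c\<bar> ^ n / fact n" by simp
      finally show ?thesis .
    qed
  qed
qed


lemma C5_family:
  fixes Uset :: "(real^'n::finite) set" and Dm :: "real^'n \<Rightarrow> real^'n \<Rightarrow> real^'n"
    and F :: "((real^'n) \<times> (real^'n)) list \<Rightarrow> (real^'n) \<times> (real^'n) \<Rightarrow> real^'n"
  assumes Uopen: "open Uset"
    and F0: "\<forall>z\<in>Uset \<times> Uset. F [] z = (\<lambda>(a, b). Dm a b) z"
    and Fd: "\<forall>vs. \<forall>z\<in>Uset \<times> Uset. (F vs has_derivative (\<lambda>v. F (v # vs) z)) (at z)"
    and C5: "((\<lambda>v. Dm a v) has_derivative (\<lambda>v. (1/2) *\<^sub>R (AA *v v))) (at a)"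
    and a: "a \<in> Uset"
  shows "F [(0, v)] (a, a) = (1/2) *\<^sub>R (AA *v v)"
proof -
  have p: "((\<lambda>b. (a, b)) has_derivative (\<lambda>v. (0, v))) (at a)"
    by (intro has_derivative_Pair has_derivative_const has_derivative_ident)
  have "((\<lambda>b. F [] (a, b)) has_derivative (\<lambda>v. F [(0, v)] (a, a))) (at a)"
    using has_derivative_compose[OF p, of "F []" "\<lambda>v. F [v] (a, a)"] Fd a by auto
  then have "((\<lambda>v. Dm a v) has_derivative (\<lambda>v. F [(0, v)] (a, a))) (at a)"
    by (rule has_derivative_transform_within_open[OF _ Uopen a]) (use F0 a in auto)
  then have "(\<lambda>v. F [(0, v)] (a, a)) = (\<lambda>v. (1/2) *\<^sub>R (AA *v v))"
    using has_derivative_unique C5 by blast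
  then show ?thesis by (rule fun_cong)
qed


lemma coeff_shift:
  fixes h x :: real assumes h: "h > 0"
  shows "(1 / h) * (2 * (h ^ Suc m * (real (Suc m) * x ^ m)) / fact (Suc m)) = 2 * ((h * x) ^ m / fact m)"
proof -
  have "fact (Suc m) = real (Suc m) * (fact m :: real)" by (simp add: fact_Suc)
  moreover have "(fact m :: real) > 0" by simp
  moreover have "0 < h * fact m + h * (fact m * real m)" using h by (simp add: add_pos_nonneg)
  ultimately show ?thesis using h by (simp add: power_mult_distrib field_simps)
qed

lemma part1:
  fixes Uset :: "(real^'n::finite) set" and Dm :: "real^'n \<Rightarrow> real^'n \<Rightarrow> real^'n"
    and AA :: "real^'n \<Rightarrow> real^'n^'n" and u :: "real \<Rightarrow> real^'n" and c :: real
  assumes Uopen: "open Uset"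
    and C5: "\<forall>a\<in>Uset. ((\<lambda>v. Dm a v) has_derivative (\<lambda>v. (1/2) *\<^sub>R (AA a *v v))) (at a)"
    and Dsm: "smooth_on (Uset \<times> Uset) (\<lambda>(a, b). Dm a b)"
    and exact: "\<And>j. j \<le> p \<Longrightarrow> (\<Sum>m\<le>N. lgl_D N i m * lgl_node N m ^ j) = real j * lgl_node N i ^ (j - 1)"
    and us: "smooth_on UNIV u" and ur: "range u \<subseteq> Uset" and i_le: "i \<le> N"
  shows "(\<lambda>h. norm ((1 / h) *\<^sub>R (\<Sum>m\<le>N. (2 * lgl_D N i m) *\<^sub>R
                   Dm (u (c + h * lgl_node N i)) (u (c + h * lgl_node N m)))
              - AA (u (c + h * lgl_node N i)) *v vector_derivative u (at (c + h * lgl_node N i))))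
          \<in> O[at_right 0](\<lambda>h. h ^ p)"
proof -
  obtain F :: "((real^'n) \<times> (real^'n)) list \<Rightarrow> (real^'n) \<times> (real^'n) \<Rightarrow> real^'n" where
    F0: "\<forall>z\<in>Uset \<times> Uset. F [] z = (\<lambda>(a, b). Dm a b) z" and
    Fd': "\<forall>vs. \<forall>z\<in>Uset \<times> Uset. (F vs has_derivative (\<lambda>v. F (v # vs) z)) (at z)" and
    Fc': "\<forall>vs. continuous_on (Uset \<times> Uset) (F vs)"
    using Dsm unfolding smooth_on_def by blast
  interpret sfam "Uset \<times> Uset" F
    by unfold_locales (use Uopen Fd' Fc' in \<open>auto intro: open_Times\<close>)
  obtain Us where Us0: "Us 0 = u" and Usd: "\<And>k t. (Us k has_vector_derivative Us (Suc k) t) (at t)"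
    using smooth_real_seq[OF us] by blast
  define V where "V k t = ((0::real^'n), Us k t)" for k t
  have Vd: "(V k has_vector_derivative V (Suc k) t) (at t)" for k t
    unfolding V_def by (intro has_vector_derivative_Pair has_vector_derivative_const Usd)
  have Vc: "continuous_on UNIV (V k)" for k
    using Vd by (intro continuous_at_imp_continuous_on ballI) (blast intro: has_vector_derivative_continuous)
  have ud: "(u has_vector_derivative Us 1 t) (at t)" for t using Usd[of 0 t] Us0 by simp
  have uc: "continuous_on UNIV u"
    using ud by (intro continuous_at_imp_continuous_on ballI) (blast intro: has_vector_derivative_continuous)
  define Y where "Y s t = (u s, u t)" for s t
  have Yd: "(Y s has_vector_derivative V 1 t) (at t)" for s t
    unfolding Y_def V_def by (intro has_vector_derivative_Pair has_vector_derivative_const ud)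
  have YA: "Y s t \<in> Uset \<times> Uset" for s t using ur unfolding Y_def by auto
  define L where "L j s t = Lam j V (Y s) t" for j s t
  have Ld: "(L j s has_vector_derivative L (Suc j) s t) (at t)" for j s t
  proof -
    have "(Lam j V (Y s) has_vector_derivative Lam (Suc j) V (Y s) t) (at t)"
      by (rule Lam_deriv[OF Vd Yd YA])
    moreover have "L j s = Lam j V (Y s)" by (auto simp: L_def)
    ultimately show ?thesis by (simp add: L_def)
  qed
  have Lc: "continuous_on UNIV (\<lambda>z. L j (fst z) (snd z))" for j
  proof -
    have "continuous_on UNIV (\<lambda>z. sum_list (map (\<lambda>ks. F (map (\<lambda>k. V k (snd z)) ks) ((\<lambda>z. (u (fst z), u (snd z))) z)) (fdb j)))"
    proof (rule Lam_cont[OF Vc])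
      show "continuous_on UNIV (snd :: real \<times> real \<Rightarrow> real)" by (intro continuous_intros)
      show "continuous_on UNIV (\<lambda>z::real \<times> real. (u (fst z), u (snd z)))"
        by (intro continuous_intros continuous_on_compose2[OF uc]) auto
      show "(\<lambda>z::real \<times> real. (u (fst z), u (snd z))) ` UNIV \<subseteq> Uset \<times> Uset" using ur by auto
    qed
    then show ?thesis by (simp add: L_def Lam_def Y_def)
  qed
  have L0: "L 0 s t = Dm (u s) (u t)" for s t
    using F0 YA[of s t] by (simp add: L_def Lam_def Y_def)
  have L1: "L 1 t t = (1/2) *\<^sub>R (AA (u t) *v vector_derivative u (at t))" for t
  proof -
    have "L 1 t t = F [(0, Us 1 t)] (u t, u t)" by (simp add: L_def Lam_def Y_def V_def)
    also have "\<dots> = (1/2) *\<^sub>R (AA (u t) *v Us 1 t)"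
      by (rule C5_family[OF Uopen F0 Fd']) (use C5 ur in auto)
    finally show ?thesis using vector_derivative_at[OF ud] by simp
  qed
  define xi where "xi m = lgl_node N m" for m
  define r where "r = 1 + (\<Sum>m\<le>N. \<bar>xi m\<bar>)"
  have xr: "\<bar>xi m\<bar> \<le> r" if "m \<le> N" for m
  proof -
    have "\<bar>xi m\<bar> \<le> (\<Sum>m\<le>N. \<bar>xi m\<bar>)" by (rule member_le_sum) (use that in auto)
    then show ?thesis unfolding r_def by simp
  qed
  have r1: "r \<ge> 1" unfolding r_def by (simp add: sum_nonneg)
  define K where "K = {c - r .. c + r}"
  obtain M where M: "M > 0" "\<And>s t. s \<in> K \<Longrightarrow> t \<in> K \<Longrightarrow> norm (L (Suc p) s t) \<le> M"
  proof -
    have "compact ((\<lambda>z. L (Suc p) (fst z) (snd z)) ` (K \<times> K))"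
      by (rule compact_continuous_image) (use continuous_on_subset[OF Lc] in \<open>auto simp: K_def intro: compact_Times\<close>)
    then obtain M where "M > 0" "\<forall>x\<in>(\<lambda>z. L (Suc p) (fst z) (snd z)) ` (K \<times> K). norm x \<le> M"
      using compact_imp_bounded bounded_pos by metis
    then show ?thesis using that by force
  qed
  define C where "C = real CARD('n)"
  have C0: "C \<ge> 0" unfolding C_def by simp
  define Q where "Q = (\<Sum>m\<le>N. \<bar>2 * lgl_D N i m\<bar>) * (C * M * r ^ Suc p / fact (Suc p)) + 2 * (C * M * r ^ p / fact p)"
  have bound: "norm ((1 / h) *\<^sub>R (\<Sum>m\<le>N. (2 * lgl_D N i m) *\<^sub>R
                   Dm (u (c + h * lgl_node N i)) (u (c + h * lgl_node N m)))
              - AA (u (c + h * lgl_node N i)) *v vector_derivative u (at (c + h * lgl_node N i)))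
        \<le> Q * h ^ p" if h: "0 < h" "h < 1" for h
  proof -
    define y where "y = c + h * xi i"
    define x where "x m = c + h * xi m" for m
    have inK: "c + h * xi m \<in> K" if "m \<le> N" for m
    proof -
      have "\<bar>h * xi m\<bar> \<le> 1 * r" unfolding abs_mult using h xr[OF that]
        by (intro mult_mono) auto
      then show ?thesis unfolding K_def by auto
    qed
    have cK: "c \<in> K" unfolding K_def using r1 by simp
    have yK: "y \<in> K" unfolding y_def using inK[OF i_le] .
    define D where "D m = lgl_D N i m" for m
    define T where "T m = (\<Sum>j<Suc p. ((x m - c) ^ j / fact j) *\<^sub>R L j y c)" for m
    define T' where "T' = (\<Sum>j<p. ((y - c) ^ j / fact j) *\<^sub>R L (Suc j) y c)"
    define W where "W = C * M * r ^ Suc p / fact (Suc p)"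
    have R1: "norm (L 0 y (x m) - T m) \<le> h ^ Suc p * W" if m: "m \<le> N" for m
    proof -
      have "norm (L 0 y (x m) - T m) \<le> real CARD('n) * M * \<bar>x m - c\<bar> ^ Suc p / fact (Suc p)"
        unfolding T_def
      proof (rule taylor_vec_bound[of "Suc p" "\<lambda>j t. L j y t" "c - r" c "c + r" "x m" M])
        show "\<And>j t. j < Suc p \<Longrightarrow> (L j y has_vector_derivative L (Suc j) y t) (at t)" by (rule Ld)
        show "c - r \<le> c" "c \<le> c + r" using r1 by auto
        show "c - r \<le> x m" "x m \<le> c + r" using inK[OF m] unfolding K_def x_def by auto
        show "\<And>t. t \<in> {c - r..c + r} \<Longrightarrow> norm (L (Suc p) y t) \<le> M"
          using M(2) yK unfolding K_def by auto
      qed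
      also have "\<bar>x m - c\<bar> \<le> h * r"
        unfolding x_def using mult_left_mono[OF xr[OF m], of h] h by (simp add: abs_mult)
      then have "\<bar>x m - c\<bar> ^ Suc p \<le> (h * r) ^ Suc p" by (rule power_mono) simp
      then have "real CARD('n) * M * \<bar>x m - c\<bar> ^ Suc p / fact (Suc p) \<le> real CARD('n) * M * (h * r) ^ Suc p / fact (Suc p)"
        using M(1) by (intro divide_right_mono mult_left_mono) auto
      also have "\<dots> = h ^ Suc p * W" unfolding W_def C_def by (simp add: power_mult_distrib)
      finally show ?thesis .
    qed
    have R2: "norm (L (Suc 0) y y - T') \<le> h ^ p * (C * M * r ^ p / fact p)"
    proof -
      have "norm (L (Suc 0) y y - T') \<le> real CARD('n) * M * \<bar>y - c\<bar> ^ p / fact p"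
        unfolding T'_def
      proof (rule taylor_vec_bound[of p "\<lambda>j t. L (Suc j) y t" "c - r" c "c + r" y M])
        show "\<And>j t. j < p \<Longrightarrow> (L (Suc j) y has_vector_derivative L (Suc (Suc j)) y t) (at t)" by (rule Ld)
        show "c - r \<le> c" "c \<le> c + r" using r1 by auto
        show "c - r \<le> y" "y \<le> c + r" using yK unfolding K_def by auto
        show "\<And>t. t \<in> {c - r..c + r} \<Longrightarrow> norm (L (Suc p) y t) \<le> M"
          using M(2) yK unfolding K_def by auto
      qed
      also have "\<bar>y - c\<bar> \<le> h * r"
        unfolding y_def using mult_left_mono[OF xr[OF i_le], of h] h by (simp add: abs_mult)
      then have "\<bar>y - c\<bar> ^ p \<le> (h * r) ^ p" by (rule power_mono) simp
      then have "real CARD('n) * M * \<bar>y - c\<bar> ^ p / fact p \<le> real CARD('n) * M * (h * r) ^ p / fact p"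
        using M(1) by (intro divide_right_mono mult_left_mono) auto
      also have "\<dots> = h ^ p * (C * M * r ^ p / fact p)" unfolding C_def by (simp add: power_mult_distrib)
      finally show ?thesis .
    qed
    have coef: "(\<Sum>m\<le>N. 2 * D m * ((x m - c) ^ j / fact j)) = 2 * (h ^ j * (real j * xi i ^ (j - 1))) / fact j"
      if j: "j \<le> p" for j
    proof -
      have "(\<Sum>m\<le>N. 2 * D m * ((x m - c) ^ j / fact j)) = 2 * h ^ j * (\<Sum>m\<le>N. D m * xi m ^ j) / fact j"
        unfolding x_def by (simp add: sum_distrib_left sum_divide_distrib power_mult_distrib algebra_simps)
      also have "(\<Sum>m\<le>N. D m * xi m ^ j) = real j * xi i ^ (j - 1)"
        unfolding D_def xi_def by (rule exact[OF j])
      finally show ?thesis by simp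
    qed
    have key: "(1 / h) *\<^sub>R (\<Sum>m\<le>N. (2 * D m) *\<^sub>R T m) = 2 *\<^sub>R T'"
    proof -
      have "(\<Sum>m\<le>N. (2 * D m) *\<^sub>R T m) = (\<Sum>m\<le>N. \<Sum>j<Suc p. (2 * D m * ((x m - c) ^ j / fact j)) *\<^sub>R L j y c)"
        unfolding T_def scaleR_sum_right scaleR_scaleR ..
      also have "\<dots> = (\<Sum>j<Suc p. \<Sum>m\<le>N. (2 * D m * ((x m - c) ^ j / fact j)) *\<^sub>R L j y c)"
        by (rule sum.swap)
      also have "\<dots> = (\<Sum>j<Suc p. (\<Sum>m\<le>N. 2 * D m * ((x m - c) ^ j / fact j)) *\<^sub>R L j y c)"
        by (simp add: scaleR_sum_left)
      also have "\<dots> = (\<Sum>j<Suc p. (2 * (h ^ j * (real j * xi i ^ (j - 1))) / fact j) *\<^sub>R L j y c)"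
      proof (rule sum.cong[OF refl])
        fix j assume "j \<in> {..<Suc p}"
        then have jp: "j \<le> p" by simp
        show "(\<Sum>m\<le>N. 2 * D m * ((x m - c) ^ j / fact j)) *\<^sub>R L j y c = (2 * (h ^ j * (real j * xi i ^ (j - 1))) / fact j) *\<^sub>R L j y c"
          by (simp only: coef[OF jp])
      qed
      also have "\<dots> = (\<Sum>j<p. (2 * (h ^ Suc j * (real (Suc j) * xi i ^ j)) / fact (Suc j)) *\<^sub>R L (Suc j) y c)"
        unfolding sum.lessThan_Suc_shift by simp
      finally have "(1 / h) *\<^sub>R (\<Sum>m\<le>N. (2 * D m) *\<^sub>R T m)
          = (\<Sum>j<p. ((1 / h) * (2 * (h ^ Suc j * (real (Suc j) * xi i ^ j)) / fact (Suc j))) *\<^sub>R L (Suc j) y c)"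
        by (simp add: scaleR_sum_right)
      also have "\<dots> = (\<Sum>j<p. (2 * ((h * xi i) ^ j / fact j)) *\<^sub>R L (Suc j) y c)"
        by (intro sum.cong refl) (simp only: coeff_shift[OF h(1)])
      also have "\<dots> = 2 *\<^sub>R T'"
        unfolding T'_def y_def by (simp add: scaleR_sum_right)
      finally show ?thesis .
    qed
    have Ev: "(1 / h) *\<^sub>R (\<Sum>m\<le>N. (2 * lgl_D N i m) *\<^sub>R
                   Dm (u (c + h * lgl_node N i)) (u (c + h * lgl_node N m)))
              - AA (u (c + h * lgl_node N i)) *v vector_derivative u (at (c + h * lgl_node N i))
        = (1 / h) *\<^sub>R (\<Sum>m\<le>N. (2 * D m) *\<^sub>R (L 0 y (x m) - T m)) - 2 *\<^sub>R (L (Suc 0) y y - T')"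
    proof -
      have a: "Dm (u (c + h * lgl_node N i)) (u (c + h * lgl_node N m)) = L 0 y (x m)" for m
        unfolding L0 y_def x_def xi_def ..
      have b: "AA (u (c + h * lgl_node N i)) *v vector_derivative u (at (c + h * lgl_node N i)) = 2 *\<^sub>R L (Suc 0) y y"
        using L1[of y] unfolding y_def xi_def by simp
      have c: "(\<Sum>m\<le>N. (2 * D m) *\<^sub>R L 0 y (x m)) = (\<Sum>m\<le>N. (2 * D m) *\<^sub>R T m) + (\<Sum>m\<le>N. (2 * D m) *\<^sub>R (L 0 y (x m) - T m))"
        by (simp add: sum.distrib[symmetric] scaleR_diff_right)
      show ?thesis unfolding a b D_def[symmetric] c scaleR_add_right key
        by (simp add: scaleR_diff_right algebra_simps)
    qed
    have n1: "norm ((1 / h) *\<^sub>R (\<Sum>m\<le>N. (2 * D m) *\<^sub>R (L 0 y (x m) - T m))) \<le> h ^ p * ((\<Sum>m\<le>N. \<bar>2 * lgl_D N i m\<bar>) * W)"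
    proof -
      have "norm (\<Sum>m\<le>N. (2 * D m) *\<^sub>R (L 0 y (x m) - T m)) \<le> (\<Sum>m\<le>N. \<bar>2 * D m\<bar> * (h ^ Suc p * W))"
        by (rule order.trans[OF norm_sum sum_mono]) (use R1 in \<open>auto intro: mult_left_mono\<close>)
      also have "\<dots> = h * (h ^ p * ((\<Sum>m\<le>N. \<bar>2 * lgl_D N i m\<bar>) * W))"
        unfolding D_def by (simp add: sum_distrib_right sum_distrib_left[symmetric] algebra_simps)
      finally show ?thesis using h by (simp add: divide_le_eq mult.commute)
    qed
    have n2: "norm (2 *\<^sub>R (L (Suc 0) y y - T')) \<le> h ^ p * (2 * (C * M * r ^ p / fact p))"
    proof -
      have "norm (2 *\<^sub>R (L (Suc 0) y y - T')) = 2 * norm (L (Suc 0) y y - T')" by simp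
      also have "\<dots> \<le> 2 * (h ^ p * (C * M * r ^ p / fact p))" using R2 by linarith
      finally show ?thesis by (simp only: mult.left_commute)
    qed
    have "norm ((1 / h) *\<^sub>R (\<Sum>m\<le>N. (2 * D m) *\<^sub>R (L 0 y (x m) - T m)) - 2 *\<^sub>R (L (Suc 0) y y - T'))
        \<le> h ^ p * ((\<Sum>m\<le>N. \<bar>2 * lgl_D N i m\<bar>) * W) + h ^ p * (2 * (C * M * r ^ p / fact p))"
      by (rule order.trans[OF norm_triangle_ineq4 add_mono[OF n1 n2]])
    also have "\<dots> = Q * h ^ p" unfolding Q_def W_def by (simp add: algebra_simps)
    finally show ?thesis unfolding Ev .
  qed
  show ?thesis
  proof (rule bigoI[of _ Q])
    show "eventually (\<lambda>h. norm (norm ((1 / h) *\<^sub>R (\<Sum>m\<le>N. (2 * lgl_D N i m) *\<^sub>R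
                   Dm (u (c + h * lgl_node N i)) (u (c + h * lgl_node N m)))
              - AA (u (c + h * lgl_node N i)) *v vector_derivative u (at (c + h * lgl_node N i)))) \<le> Q * norm (h ^ p)) (at_right 0)"
      unfolding eventually_at_right_field
      by (intro exI[of _ 1]) (auto intro!: order.trans[OF _ bound] simp: abs_of_pos)
  qed
qed


theorem theorem1:
  fixes Uset :: "(real^'n::finite) set"
    and f :: "real^'n \<Rightarrow> real^'n"
    and fder :: "real^'n \<Rightarrow> ((real^'n) \<Rightarrow>\<^sub>L (real^'n))"
    and B :: "real^'n \<Rightarrow> real^'n^'n"
    and S :: "real^'n \<Rightarrow> real" and w :: "real^'n \<Rightarrow> real^'n" and q :: "real^'n \<Rightarrow> real"
    and \<Phi> :: "real \<Rightarrow> real^'n \<Rightarrow> real^'n \<Rightarrow> real^'n"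
    and Dm Dp :: "real^'n \<Rightarrow> real^'n \<Rightarrow> real^'n"
    and N p :: nat
  assumes Uopen: "open Uset"
    and f_C1: "\<forall>u\<in>Uset. (f has_derivative blinfun_apply (fder u)) (at u)"
    and fder_cont: "continuous_on Uset fder"
    and B_cont: "continuous_on Uset B"
    and S_convex: "strict_convex_on Uset S"
    and S_C2: "C2_with_gradient Uset S w"
    and q_flux: "\<forall>u\<in>Uset. (q has_derivative (\<lambda>v. w u \<bullet> (gen_jacobian fder B u *v v))) (at u)"
    and paths: "path_family Uset \<Phi>"
    and EC: "EC_fluctuations Uset (gen_jacobian fder B) \<Phi> w q Dm Dp"
    and Dm_smooth: "smooth_on (Uset \<times> Uset) (\<lambda>(a, b). Dm a b)"
    and Dp_smooth: "smooth_on (Uset \<times> Uset) (\<lambda>(a, b). Dp a b)"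
    and N_pos: "N \<ge> 1"
    and D_accurate: "\<forall>g i c. smooth_on UNIV g \<and> i \<le> N \<longrightarrow>
        (\<lambda>h. (1 / h) * (\<Sum>m\<le>N. lgl_D N i m * g (c + h * lgl_node N m))
              - deriv g (c + h * lgl_node N i)) \<in> O[at_right 0](\<lambda>h. h ^ p)"
  shows
    "(\<forall>(u :: real \<Rightarrow> real^'n) c i. smooth_on UNIV u \<and> range u \<subseteq> Uset \<and> i \<le> N \<longrightarrow>
        (\<lambda>h. norm ((1 / h) *\<^sub>R (\<Sum>m\<le>N. (2 * lgl_D N i m) *\<^sub>R
                   Dm (u (c + h * lgl_node N i)) (u (c + h * lgl_node N m)))
              - gen_jacobian fder B (u (c + h * lgl_node N i))
                  *v vector_derivative u (at (c + h * lgl_node N i))))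
          \<in> O[at_right 0](\<lambda>h. h ^ p))
   \<and>
    (\<forall>(dx :: int \<Rightarrow> real) (U :: int \<Rightarrow> nat \<Rightarrow> real \<Rightarrow> real^'n) (U' :: int \<Rightarrow> nat \<Rightarrow> real \<Rightarrow> real^'n).
       (\<forall>k. dx k > 0) \<and>
       (\<forall>k i t. i \<le> N \<longrightarrow> U k i t \<in> Uset \<and> (U k i has_vector_derivative U' k i t) (at t)) \<and>
       (\<forall>k i t. i \<le> N \<longrightarrow>
          (lgl_weight N i * (dx k / 2)) *\<^sub>R U' k i t
          + lgl_weight N i *\<^sub>R (\<Sum>m\<le>N. (2 * lgl_D N i m) *\<^sub>R Dm (U k i t) (U k m t))
          + (if i = 0 then Dp (U (k - 1) N t) (U k 0 t) else 0)
          + (if i = N then Dm (U k N t) (U (k + 1) 0 t) else 0) = 0)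
       \<longrightarrow>
       (\<forall>k t. ((\<lambda>t. \<Sum>i\<le>N. lgl_weight N i * (dx k / 2) * S (U k i t)) has_real_derivative
                 ((q (U (k - 1) N t) + w (U (k - 1) N t) \<bullet> Dm (U (k - 1) N t) (U k 0 t))
                - (q (U k N t) + w (U k N t) \<bullet> Dm (U k N t) (U (k + 1) 0 t)))) (at t)))"
  proof -
  have C1: "\<forall>u\<in>Uset. Dm u u = 0" and C3: "\<forall>a\<in>Uset. \<forall>b\<in>Uset. Dm a b + Dp b a = 0"
    and C4: "\<forall>a\<in>Uset. \<forall>b\<in>Uset. w a \<bullet> Dm a b + w b \<bullet> Dp a b = q b - q a"
    and C5: "\<forall>a\<in>Uset. ((\<lambda>v. Dm a v) has_derivative (\<lambda>v. (1/2) *\<^sub>R (gen_jacobian fder B a *v v))) (at a)"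
    using EC unfolding EC_fluctuations_def by blast+
  have Sd: "\<forall>u\<in>Uset. (S has_derivative (\<lambda>v. w u \<bullet> v)) (at u)"
    using S_C2 unfolding C2_with_gradient_def by blast
  have P1: "\<forall>(u :: real \<Rightarrow> real^'n) c i. smooth_on UNIV u \<and> range u \<subseteq> Uset \<and> i \<le> N \<longrightarrow>
        (\<lambda>h. norm ((1 / h) *\<^sub>R (\<Sum>m\<le>N. (2 * lgl_D N i m) *\<^sub>R
                   Dm (u (c + h * lgl_node N i)) (u (c + h * lgl_node N m)))
              - gen_jacobian fder B (u (c + h * lgl_node N i))
                  *v vector_derivative u (at (c + h * lgl_node N i))))
          \<in> O[at_right 0](\<lambda>h. h ^ p)"
  proof (intro allI impI)
    fix u :: "real \<Rightarrow> real^'n" and c :: real and i :: nat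
    assume H: "smooth_on UNIV u \<and> range u \<subseteq> Uset \<and> i \<le> N"
    show "(\<lambda>h. norm ((1 / h) *\<^sub>R (\<Sum>m\<le>N. (2 * lgl_D N i m) *\<^sub>R
                   Dm (u (c + h * lgl_node N i)) (u (c + h * lgl_node N m)))
              - gen_jacobian fder B (u (c + h * lgl_node N i))
                  *v vector_derivative u (at (c + h * lgl_node N i))))
          \<in> O[at_right 0](\<lambda>h. h ^ p)"
    proof (rule part1[OF Uopen C5 Dm_smooth])
      show "\<And>j. j \<le> p \<Longrightarrow> (\<Sum>m\<le>N. lgl_D N i m * lgl_node N m ^ j) = real j * lgl_node N i ^ (j - 1)"
        using D_exact[OF D_accurate] H by blast
    qed (use H in auto)
  qed
  have P2: "\<forall>(dx :: int \<Rightarrow> real) (U :: int \<Rightarrow> nat \<Rightarrow> real \<Rightarrow> real^'n) (U' :: int \<Rightarrow> nat \<Rightarrow> real \<Rightarrow> real^'n).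
       (\<forall>k. dx k > 0) \<and>
       (\<forall>k i t. i \<le> N \<longrightarrow> U k i t \<in> Uset \<and> (U k i has_vector_derivative U' k i t) (at t)) \<and>
       (\<forall>k i t. i \<le> N \<longrightarrow>
          (lgl_weight N i * (dx k / 2)) *\<^sub>R U' k i t
          + lgl_weight N i *\<^sub>R (\<Sum>m\<le>N. (2 * lgl_D N i m) *\<^sub>R Dm (U k i t) (U k m t))
          + (if i = 0 then Dp (U (k - 1) N t) (U k 0 t) else 0)
          + (if i = N then Dm (U k N t) (U (k + 1) 0 t) else 0) = 0)
       \<longrightarrow>
       (\<forall>k t. ((\<lambda>t. \<Sum>i\<le>N. lgl_weight N i * (dx k / 2) * S (U k i t)) has_real_derivative
                 ((q (U (k - 1) N t) + w (U (k - 1) N t) \<bullet> Dm (U (k - 1) N t) (U k 0 t))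
                - (q (U k N t) + w (U k N t) \<bullet> Dm (U k N t) (U (k + 1) 0 t)))) (at t))"
  proof (intro allI impI)
    fix dx :: "int \<Rightarrow> real" and U U' :: "int \<Rightarrow> nat \<Rightarrow> real \<Rightarrow> real^'n" and k :: int and t :: real
    assume H: "(\<forall>k. dx k > 0) \<and>
       (\<forall>k i t. i \<le> N \<longrightarrow> U k i t \<in> Uset \<and> (U k i has_vector_derivative U' k i t) (at t)) \<and>
       (\<forall>k i t. i \<le> N \<longrightarrow>
          (lgl_weight N i * (dx k / 2)) *\<^sub>R U' k i t
          + lgl_weight N i *\<^sub>R (\<Sum>m\<le>N. (2 * lgl_D N i m) *\<^sub>R Dm (U k i t) (U k m t))
          + (if i = 0 then Dp (U (k - 1) N t) (U k 0 t) else 0)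
          + (if i = N then Dm (U k N t) (U (k + 1) 0 t) else 0) = 0)"
    show "((\<lambda>t. \<Sum>i\<le>N. lgl_weight N i * (dx k / 2) * S (U k i t)) has_real_derivative
                 ((q (U (k - 1) N t) + w (U (k - 1) N t) \<bullet> Dm (U (k - 1) N t) (U k 0 t))
                - (q (U k N t) + w (U k N t) \<bullet> Dm (U k N t) (U (k + 1) 0 t)))) (at t)"
      by (rule part2[where U'=U', OF N_pos D_rowsum[OF D_accurate] C1 C3 C4 Sd]) (use H in blast)+
  qed
  show ?thesis using P1 P2 by blast
qed

end
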